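(* Let $\mathbf{k}$ be a field, $Q$ a finite connected quiver, $\Lambda=\mathbf{k}Q/\mathcal{J}^2$ ($\mathcal{J}$ the arrow ideal), $n\ge2$, and assume $\mathcal{C}\subseteq\operatorname{mod}\Lambda$ is an $n$-cluster tilting subcategory. Then for every arrow $v\to u$ in $Q$ we have $\delta^+(v)+\delta^-(u)\le3$.
   Context: Modules are finite-dimensional right modules. $\mathcal{C}$ is $n$-cluster tilting if it is functorially finite and $\mathcal{C}=\{X\mid \operatorname{Ext}^i(X,\mathcal{C})=0\ \forall 0<i<n\}=\{X\mid\operatorname{Ext}^i(\mathcal{C},X)=0\ \forall 0<i<n\}$. $\delta^-(v)$, $\delta^+(v)$ are the numbers of arrows ending, resp. starting, at $v$. *)

theory Defs
  imports "Jordan_Normal_Form.Matrix"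
begin

text \<open>Finite quivers and finite-dimensional representations of Q bound by the
  relations J^2 = 0 (all paths of length 2 vanish), i.e. modules over kQ/J^2,
  with vector spaces given in coordinates k^d.\<close>

record ('v, 'a) quiver =
  verts :: "'v set"
  arrs  :: "'a set"
  src   :: "'a \<Rightarrow> 'v"
  tgt   :: "'a \<Rightarrow> 'v"

definition finite_quiver :: "('v, 'a) quiver \<Rightarrow> bool" where
  "finite_quiver Q \<longleftrightarrow> finite (verts Q) \<and> finite (arrs Q) \<and>
     (\<forall>a\<in>arrs Q. src Q a \<in> verts Q \<and> tgt Q a \<in> verts Q)"

definition quiver_connected :: "('v, 'a) quiver \<Rightarrow> bool" where
  "quiver_connected Q \<longleftrightarrow> verts Q \<noteq> {} \<and>
     (\<forall>x\<in>verts Q. \<forall>y\<in>verts Q.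
        (x, y) \<in> (let E = {(src Q a, tgt Q a) | a. a \<in> arrs Q} in (E \<union> E\<inverse>)\<^sup>*))"

definition out_deg :: "('v, 'a) quiver \<Rightarrow> 'v \<Rightarrow> nat" where
  "out_deg Q v = card {a \<in> arrs Q. src Q a = v}"

definition in_deg :: "('v, 'a) quiver \<Rightarrow> 'v \<Rightarrow> nat" where
  "in_deg Q v = card {a \<in> arrs Q. tgt Q a = v}"

record ('v, 'a, 'k) rep =
  rdim :: "'v \<Rightarrow> nat"
  rmap :: "'a \<Rightarrow> 'k mat"

definition is_rep :: "('v, 'a) quiver \<Rightarrow> ('v, 'a, 'k::field) rep \<Rightarrow> bool" where
  "is_rep Q X \<longleftrightarrow>
     (\<forall>a\<in>arrs Q. rmap X a \<in> carrier_mat (rdim X (tgt Q a)) (rdim X (src Q a))) \<and>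
     (\<forall>a\<in>arrs Q. \<forall>b\<in>arrs Q. tgt Q a = src Q b \<longrightarrow>
        rmap X b * rmap X a = 0\<^sub>m (rdim X (tgt Q b)) (rdim X (src Q a)))"

definition is_hom :: "('v, 'a) quiver \<Rightarrow> ('v, 'a, 'k::field) rep \<Rightarrow> ('v, 'a, 'k) rep
    \<Rightarrow> ('v \<Rightarrow> 'k mat) \<Rightarrow> bool" where
  "is_hom Q X Y f \<longleftrightarrow>
     (\<forall>v\<in>verts Q. f v \<in> carrier_mat (rdim Y v) (rdim X v)) \<and>
     (\<forall>a\<in>arrs Q. f (tgt Q a) * rmap X a = rmap Y a * f (src Q a))"

definition hom_comp :: "('v \<Rightarrow> 'k::field mat) \<Rightarrow> ('v \<Rightarrow> 'k mat) \<Rightarrow> ('v \<Rightarrow> 'k mat)" where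
  "hom_comp g f = (\<lambda>v. g v * f v)"

definition hom_eq :: "('v, 'a) quiver \<Rightarrow> ('v \<Rightarrow> 'k mat) \<Rightarrow> ('v \<Rightarrow> 'k mat) \<Rightarrow> bool" where
  "hom_eq Q f g \<longleftrightarrow> (\<forall>v\<in>verts Q. f v = g v)"

definition hom_id :: "('v, 'a, 'k::field) rep \<Rightarrow> ('v \<Rightarrow> 'k mat)" where
  "hom_id X = (\<lambda>v. 1\<^sub>m (rdim X v))"

definition hom_injective :: "('v, 'a) quiver \<Rightarrow> ('v, 'a, 'k::field) rep \<Rightarrow> ('v \<Rightarrow> 'k mat) \<Rightarrow> bool" where
  "hom_injective Q X f \<longleftrightarrow>
     (\<forall>v\<in>verts Q. \<forall>x\<in>carrier_vec (rdim X v). f v *\<^sub>v x = 0\<^sub>v (dim_row (f v)) \<longrightarrow> x = 0\<^sub>v (rdim X v))"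

definition hom_surjective :: "('v, 'a) quiver \<Rightarrow> ('v, 'a, 'k::field) rep \<Rightarrow> ('v, 'a, 'k) rep
    \<Rightarrow> ('v \<Rightarrow> 'k mat) \<Rightarrow> bool" where
  "hom_surjective Q X Y f \<longleftrightarrow>
     (\<forall>v\<in>verts Q. \<forall>y\<in>carrier_vec (rdim Y v). \<exists>x\<in>carrier_vec (rdim X v). f v *\<^sub>v x = y)"

definition ses :: "('v, 'a) quiver \<Rightarrow> ('v, 'a, 'k::field) rep \<Rightarrow> ('v, 'a, 'k) rep \<Rightarrow> ('v, 'a, 'k) rep
    \<Rightarrow> ('v \<Rightarrow> 'k mat) \<Rightarrow> ('v \<Rightarrow> 'k mat) \<Rightarrow> bool" where
  "ses Q X E Z f g \<longleftrightarrow>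
     is_rep Q X \<and> is_rep Q E \<and> is_rep Q Z \<and> is_hom Q X E f \<and> is_hom Q E Z g \<and>
     hom_injective Q X f \<and> hom_surjective Q E Z g \<and>
     (\<forall>v\<in>verts Q. \<forall>y\<in>carrier_vec (rdim E v).
        g v *\<^sub>v y = 0\<^sub>v (rdim Z v) \<longleftrightarrow> (\<exists>x\<in>carrier_vec (rdim X v). f v *\<^sub>v x = y))"

definition is_projective :: "('v, 'a) quiver \<Rightarrow> ('v, 'a, 'k::field) rep \<Rightarrow> bool" where
  "is_projective Q P \<longleftrightarrow> is_rep Q P \<and>
     (\<forall>X Y g h. is_rep Q X \<and> is_rep Q Y \<and> is_hom Q X Y g \<and> hom_surjective Q X Y g \<and>
        is_hom Q P Y h \<longrightarrow> (\<exists>h'. is_hom Q P X h' \<and> hom_eq Q (hom_comp g h') h))"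

definition ext1_zero :: "('v, 'a) quiver \<Rightarrow> ('v, 'a, 'k::field) rep \<Rightarrow> ('v, 'a, 'k) rep \<Rightarrow> bool" where
  "ext1_zero Q Z X \<longleftrightarrow>
     (\<forall>E f g. ses Q X E Z f g \<longrightarrow>
        (\<exists>s. is_hom Q Z E s \<and> hom_eq Q (hom_comp g s) (hom_id Z)))"

text \<open>ext_zero Q i Z X means Ext^i(Z,X) = 0, computed by dimension shifting:
  Ext^(i+1)(Z,X) = Ext^i(K,X) for any 0 -> K -> P -> Z -> 0 with P projective (i >= 1).
  Ext^0 = Hom.\<close>
fun ext_zero :: "('v, 'a) quiver \<Rightarrow> nat \<Rightarrow> ('v, 'a, 'k::field) rep \<Rightarrow> ('v, 'a, 'k) rep \<Rightarrow> bool" where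
  "ext_zero Q 0 Z X \<longleftrightarrow>
     (\<forall>f. is_hom Q Z X f \<longrightarrow> (\<forall>v\<in>verts Q. f v = 0\<^sub>m (rdim X v) (rdim Z v)))"
| "ext_zero Q (Suc 0) Z X \<longleftrightarrow> ext1_zero Q Z X"
| "ext_zero Q (Suc (Suc i)) Z X \<longleftrightarrow>
     (\<exists>K P f g. is_projective Q P \<and> ses Q K P Z f g \<and> ext_zero Q (Suc i) K X)"

definition contravariantly_finite :: "('v, 'a) quiver \<Rightarrow> ('v, 'a, 'k::field) rep set \<Rightarrow> bool" where
  "contravariantly_finite Q \<C> \<longleftrightarrow>
     (\<forall>X. is_rep Q X \<longrightarrow> (\<exists>C\<in>\<C>. \<exists>f. is_hom Q C X f \<and>
        (\<forall>C'\<in>\<C>. \<forall>h. is_hom Q C' X h \<longrightarrow> (\<exists>h'. is_hom Q C' C h' \<and> hom_eq Q (hom_comp f h') h))))"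

definition covariantly_finite :: "('v, 'a) quiver \<Rightarrow> ('v, 'a, 'k::field) rep set \<Rightarrow> bool" where
  "covariantly_finite Q \<C> \<longleftrightarrow>
     (\<forall>X. is_rep Q X \<longrightarrow> (\<exists>C\<in>\<C>. \<exists>f. is_hom Q X C f \<and>
        (\<forall>C'\<in>\<C>. \<forall>h. is_hom Q X C' h \<longrightarrow> (\<exists>h'. is_hom Q C C' h' \<and> hom_eq Q (hom_comp h' f) h))))"

definition functorially_finite :: "('v, 'a) quiver \<Rightarrow> ('v, 'a, 'k::field) rep set \<Rightarrow> bool" where
  "functorially_finite Q \<C> \<longleftrightarrow> \<C> \<subseteq> {X. is_rep Q X} \<and>
     contravariantly_finite Q \<C> \<and> covariantly_finite Q \<C>"

definition n_cluster_tilting :: "('v, 'a) quiver \<Rightarrow> nat \<Rightarrow> ('v, 'a, 'k::field) rep set \<Rightarrow> bool" where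
  "n_cluster_tilting Q n \<C> \<longleftrightarrow> functorially_finite Q \<C> \<and>
     \<C> = {X. is_rep Q X \<and> (\<forall>i. 0 < i \<and> i < n \<longrightarrow> (\<forall>C\<in>\<C>. ext_zero Q i X C))} \<and>
     \<C> = {X. is_rep Q X \<and> (\<forall>i. 0 < i \<and> i < n \<longrightarrow> (\<forall>C\<in>\<C>. ext_zero Q i C X))}"

end

theory Submission
  imports Defs "Jordan_Normal_Form.Gauss_Jordan_Elimination"
begin


definition enum :: "'b set \<Rightarrow> nat \<Rightarrow> 'b" where
  "enum S = (SOME h. bij_betw h {..<card S} S)"

lemma enum_bij: "finite S \<Longrightarrow> bij_betw (enum S) {..<card S} S"
proof -
  assume "finite S"
  then obtain h where "bij_betw h {0..<card S} S" using ex_bij_betw_nat_finite by blast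
  hence "\<exists>h. bij_betw h {..<card S} S" by (metis atLeast0LessThan)
  thus ?thesis unfolding enum_def by (rule someI_ex)
qed

definition idx :: "'b set \<Rightarrow> 'b \<Rightarrow> nat" where
  "idx S = the_inv_into {..<card S} (enum S)"

lemma idx_enum[simp]: "finite S \<Longrightarrow> i < card S \<Longrightarrow> idx S (enum S i) = i"
  unfolding idx_def using enum_bij
  by (metis bij_betw_def lessThan_iff the_inv_into_f_f)

lemma enum_idx[simp]: "finite S \<Longrightarrow> x \<in> S \<Longrightarrow> enum S (idx S x) = x"
  unfolding idx_def using enum_bij
  by (metis bij_betw_def f_the_inv_into_f_bij_betw)

lemma idx_less[simp]: "finite S \<Longrightarrow> x \<in> S \<Longrightarrow> idx S x < card S"
  unfolding idx_def using enum_bij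
  by (metis bij_betw_def lessThan_iff the_inv_into_into order_refl)

lemma enum_in[simp]: "finite S \<Longrightarrow> i < card S \<Longrightarrow> enum S i \<in> S"
  using enum_bij by (metis bij_betwE lessThan_iff)

lemma idx_inj: "finite S \<Longrightarrow> x \<in> S \<Longrightarrow> y \<in> S \<Longrightarrow> idx S x = idx S y \<Longrightarrow> x = y"
  by (metis enum_idx)

definition bmat :: "'b set \<Rightarrow> 'c set \<Rightarrow> ('b \<Rightarrow> 'c \<Rightarrow> 'k) \<Rightarrow> 'k mat" where
  "bmat R C \<phi> = mat (card R) (card C) (\<lambda>(i,j). \<phi> (enum R i) (enum C j))"

definition ent :: "'b set \<Rightarrow> 'c set \<Rightarrow> 'k mat \<Rightarrow> 'b \<Rightarrow> 'c \<Rightarrow> 'k" where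
  "ent R C A r c = A $$ (idx R r, idx C c)"

definition bvec :: "'b set \<Rightarrow> ('b \<Rightarrow> 'k) \<Rightarrow> 'k vec" where
  "bvec R \<phi> = vec (card R) (\<lambda>i. \<phi> (enum R i))"

definition vent :: "'b set \<Rightarrow> 'k vec \<Rightarrow> 'b \<Rightarrow> 'k" where
  "vent R x r = x $ idx R r"

lemma bmat_carrier[simp]: "bmat R C \<phi> \<in> carrier_mat (card R) (card C)"
  unfolding bmat_def by simp

lemma bvec_carrier[simp]: "bvec R \<phi> \<in> carrier_vec (card R)"
  unfolding bvec_def by simp

lemma ent_bmat[simp]: "finite R \<Longrightarrow> finite C \<Longrightarrow> r \<in> R \<Longrightarrow> c \<in> C \<Longrightarrow> ent R C (bmat R C \<phi>) r c = \<phi> r c"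
  unfolding ent_def bmat_def by simp

lemma vent_bvec[simp]: "finite R \<Longrightarrow> r \<in> R \<Longrightarrow> vent R (bvec R \<phi>) r = \<phi> r"
  unfolding vent_def bvec_def by simp

lemma ent_eqI:
  assumes "finite R" "finite C" "A \<in> carrier_mat (card R) (card C)" "B \<in> carrier_mat (card R) (card C)"
    and "\<And>r c. r \<in> R \<Longrightarrow> c \<in> C \<Longrightarrow> ent R C A r c = ent R C B r c"
  shows "A = B"
proof (rule eq_matI)
  fix i j assume "i < dim_row B" "j < dim_col B"
  hence i: "i < card R" and j: "j < card C" using assms by auto
  have "ent R C A (enum R i) (enum C j) = ent R C B (enum R i) (enum C j)"
    using assms i j by auto
  thus "A $$ (i, j) = B $$ (i, j)" unfolding ent_def using assms i j by simp
qed (use assms in auto)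

lemma vent_eqI:
  assumes "finite R" "x \<in> carrier_vec (card R)" "y \<in> carrier_vec (card R)"
    and "\<And>r. r \<in> R \<Longrightarrow> vent R x r = vent R y r"
  shows "x = y"
proof (rule eq_vecI)
  fix i assume "i < dim_vec y"
  hence i: "i < card R" using assms by auto
  have "vent R x (enum R i) = vent R y (enum R i)" using assms i by auto
  thus "x $ i = y $ i" unfolding vent_def using assms i by simp
qed (use assms in auto)

lemma sum_enum:
  assumes "finite S" shows "(\<Sum>i<card S. g (enum S i)) = (\<Sum>s\<in>S. g s)"
  using sum.reindex_bij_betw[OF enum_bij[OF assms], of g] by simp

lemma ent_mult:
  assumes "finite R" "finite S" "finite T"
    and "A \<in> carrier_mat (card R) (card S)" "B \<in> carrier_mat (card S) (card T)"
    and "r \<in> R" "t \<in> T"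
  shows "ent R T (A * B) r t = (\<Sum>s\<in>S. ent R S A r s * ent S T B s t)"
proof -
  have "ent R T (A * B) r t = (\<Sum>i<card S. A $$ (idx R r, i) * B $$ (i, idx T t))"
    unfolding ent_def using assms
    by (simp add: scalar_prod_def atLeast0LessThan)
  also have "\<dots> = (\<Sum>i<card S. A $$ (idx R r, idx S (enum S i)) * B $$ (idx S (enum S i), idx T t))"
    using assms by simp
  also have "\<dots> = (\<Sum>s\<in>S. ent R S A r s * ent S T B s t)"
    unfolding ent_def by (rule sum_enum[OF assms(2), of "\<lambda>s. A $$ (idx R r, idx S s) * B $$ (idx S s, idx T t)"])
  finally show ?thesis .
qed

lemma vent_mult:
  assumes "finite R" "finite S"
    and "A \<in> carrier_mat (card R) (card S)" "x \<in> carrier_vec (card S)" "r \<in> R"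
  shows "vent R (A *\<^sub>v x) r = (\<Sum>s\<in>S. ent R S A r s * vent S x s)"
proof -
  have "vent R (A *\<^sub>v x) r = (\<Sum>i<card S. A $$ (idx R r, i) * x $ i)"
    unfolding vent_def using assms
    by (simp add: scalar_prod_def atLeast0LessThan)
  also have "\<dots> = (\<Sum>i<card S. A $$ (idx R r, idx S (enum S i)) * x $ (idx S (enum S i)))"
    using assms by simp
  also have "\<dots> = (\<Sum>s\<in>S. ent R S A r s * vent S x s)"
    unfolding ent_def vent_def by (rule sum_enum[OF assms(2), of "\<lambda>s. A $$ (idx R r, idx S s) * x $ (idx S s)"])
  finally show ?thesis .
qed

lemma ent_one[simp]: "finite R \<Longrightarrow> r \<in> R \<Longrightarrow> r' \<in> R \<Longrightarrow> ent R R (1\<^sub>m (card R)) r r' = (if r = r' then 1 else 0)"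
  unfolding ent_def using idx_inj by fastforce

lemma ent_zero[simp]: "finite R \<Longrightarrow> finite C \<Longrightarrow> r \<in> R \<Longrightarrow> c \<in> C \<Longrightarrow> ent R C (0\<^sub>m (card R) (card C)) r c = 0"
  unfolding ent_def by simp

lemma vent_zero[simp]: "finite R \<Longrightarrow> r \<in> R \<Longrightarrow> vent R (0\<^sub>v (card R)) r = 0"
  unfolding vent_def by simp

lemma ent_col: "finite R \<Longrightarrow> finite C \<Longrightarrow> A \<in> carrier_mat (card R) (card C) \<Longrightarrow> r \<in> R \<Longrightarrow> c \<in> C \<Longrightarrow>
  vent R (col A (idx C c)) r = ent R C A r c"
  unfolding ent_def vent_def by simp


definition zrep :: "('v, 'a, 'k::field) rep" where
  "zrep = \<lparr>rdim = (\<lambda>_. 0), rmap = (\<lambda>_. 0\<^sub>m 0 0)\<rparr>"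

lemma zrep_simps[simp]: "rdim zrep w = 0" "rmap zrep a = 0\<^sub>m 0 0"
  unfolding zrep_def by simp_all

lemma zrep_rep: "is_rep Q (zrep :: ('v, 'a, 'k::field) rep)"
  unfolding is_rep_def by auto

lemma mat_0col_eq: "A \<in> carrier_mat n 0 \<Longrightarrow> B \<in> carrier_mat n 0 \<Longrightarrow> A = B"
  by (intro eq_matI) auto

lemma mat_0row_eq: "A \<in> carrier_mat 0 n \<Longrightarrow> B \<in> carrier_mat 0 n \<Longrightarrow> A = B"
  by (intro eq_matI) auto

lemma zero_mult_vec0[simp]: "x \<in> carrier_vec 0 \<Longrightarrow> 0\<^sub>m n 0 *\<^sub>v x = 0\<^sub>v n"
  by (intro eq_vecI) (auto simp: scalar_prod_def)

lemma hom_id_hom: "is_rep Q X \<Longrightarrow> is_hom Q X X (hom_id X)"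
  unfolding is_hom_def hom_id_def is_rep_def by auto

lemma zrep_proj: "is_projective Q (zrep :: ('v, 'a, 'k::field) rep)"
  unfolding is_projective_def
proof (intro conjI allI impI zrep_rep)
  fix X Y :: "('v, 'a, 'k) rep" and g h
  assume a: "is_rep Q X \<and> is_rep Q Y \<and> is_hom Q X Y g \<and> hom_surjective Q X Y g \<and> is_hom Q zrep Y h"
  let ?h = "\<lambda>w. 0\<^sub>m (rdim X w) 0 :: 'k mat"
  have "is_hom Q zrep X ?h" unfolding is_hom_def using a
    by (auto simp: is_rep_def intro!: mat_0col_eq)
  moreover have "hom_eq Q (hom_comp g ?h) h" unfolding hom_eq_def hom_comp_def
    using a by (auto simp: is_hom_def intro!: mat_0col_eq)
  ultimately show "\<exists>h'. is_hom Q zrep X h' \<and> hom_eq Q (hom_comp g h') h" by blast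
qed

lemma ses_triv:
  assumes P: "is_rep Q P"
  shows "ses Q zrep P P (\<lambda>w. 0\<^sub>m (rdim P w) 0) (hom_id P)"
  unfolding ses_def
proof (intro conjI zrep_rep P hom_id_hom)
  show "is_hom Q zrep P (\<lambda>w. 0\<^sub>m (rdim P w) 0)" unfolding is_hom_def using P
    by (auto simp: is_rep_def intro!: mat_0col_eq)
  show "hom_injective Q zrep (\<lambda>w. 0\<^sub>m (rdim P w) 0)" unfolding hom_injective_def by auto
  show "hom_surjective Q P P (hom_id P)" unfolding hom_surjective_def hom_id_def by auto
  show "\<forall>v\<in>verts Q. \<forall>y\<in>carrier_vec (rdim P v).
       (hom_id P v *\<^sub>v y = 0\<^sub>v (rdim P v)) = (\<exists>x\<in>carrier_vec (rdim zrep v). 0\<^sub>m (rdim P v) 0 *\<^sub>v x = y)"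
    unfolding hom_id_def by auto (metis zero_carrier_vec)
qed

lemma ext1_zrep: "ext1_zero Q (zrep :: ('v, 'a, 'k::field) rep) X"
  unfolding ext1_zero_def
proof (intro allI impI)
  fix E :: "('v, 'a, 'k) rep" and f g
  assume s: "ses Q X E zrep f g"
  let ?s = "\<lambda>w. 0\<^sub>m (rdim E w) 0 :: 'k mat"
  have "is_hom Q zrep E ?s" unfolding is_hom_def using s
    by (auto simp: is_rep_def ses_def intro!: mat_0col_eq)
  moreover have "hom_eq Q (hom_comp g ?s) (hom_id zrep)" unfolding hom_eq_def hom_comp_def hom_id_def
    using s by (auto simp: is_hom_def ses_def intro!: mat_0col_eq)
  ultimately show "\<exists>s. is_hom Q zrep E s \<and> hom_eq Q (hom_comp g s) (hom_id zrep)" by blast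
qed

lemma ext_zrep: "ext_zero Q (Suc j) (zrep :: ('v, 'a, 'k::field) rep) X"
proof (induction j)
  case 0
  then show ?case using ext1_zrep by simp
next
  case (Suc j)
  show ?case using ses_triv[OF zrep_rep] Suc zrep_proj by (simp only: ext_zero.simps) blast
qed

lemma proj_ext1:
  assumes P: "is_projective Q P" shows "ext1_zero Q P X"
  unfolding ext1_zero_def
proof (intro allI impI)
  fix E f g assume s: "ses Q X E P f g"
  have "is_rep Q P" using P by (simp add: is_projective_def)
  hence "is_hom Q P P (hom_id P)" by (rule hom_id_hom)
  thus "\<exists>s. is_hom Q P E s \<and> hom_eq Q (hom_comp g s) (hom_id P)"
    using P s unfolding is_projective_def ses_def by blast
qed

lemma proj_ext:
  assumes P: "is_projective Q P" and i: "0 < i" shows "ext_zero Q i P X"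
proof -
  obtain j where j: "i = Suc j" using i by (cases i) auto
  show ?thesis unfolding j
  proof (cases j)
    case 0 thus "ext_zero Q (Suc j) P X" using proj_ext1[OF P] by simp
  next
    case (Suc j')
    have "is_rep Q P" using P by (simp add: is_projective_def)
    hence "ses Q zrep P P (\<lambda>w. 0\<^sub>m (rdim P w) 0) (hom_id P)" by (rule ses_triv)
    moreover have "ext_zero Q (Suc j') zrep X" by (rule ext_zrep)
    ultimately show "ext_zero Q (Suc j) P X" unfolding Suc using P
      by (simp only: ext_zero.simps) blast
  qed
qed

lemma inj_ext:
  assumes I: "\<And>Z. ext1_zero Q Z I"
  shows "0 < i \<Longrightarrow> ext_zero Q i C X \<Longrightarrow> ext_zero Q i C I"
proof (induction i arbitrary: C rule: nat_less_induct)
  case (1 i)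
  show ?case
  proof (cases i)
    case 0 thus ?thesis using 1 by simp
  next
    case (Suc j)
    show ?thesis
    proof (cases j)
      case 0 thus ?thesis using Suc I by simp
    next
      case (Suc j')
      from 1(3) obtain K P f g where "is_projective Q P" "ses Q K P C f g" "ext_zero Q (Suc j') K X"
        using \<open>i = Suc j\<close> Suc by auto
      moreover have "ext_zero Q (Suc j') K I"
        using 1(1) \<open>i = Suc j\<close> Suc calculation(3) by auto
      ultimately show ?thesis using \<open>i = Suc j\<close> Suc by auto
    qed
  qed
qed

lemma ct_contra:
  fixes Q :: "('v, 'a) quiver" and \<C> :: "('v, 'a, 'k::field) rep set" and P I :: "('v, 'a, 'k) rep"
  assumes ct: "n_cluster_tilting Q n \<C>" and n: "n \<ge> 2"
    and P: "is_projective Q P" and I: "\<And>Z. ext1_zero Q Z I" and Irep: "is_rep Q I"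
    and ns: "\<not> ext1_zero Q I P"
  shows False
proof -
  have C1: "\<C> = {X. is_rep Q X \<and> (\<forall>i. 0 < i \<and> i < n \<longrightarrow> (\<forall>C\<in>\<C>. ext_zero Q i X C))}"
   and C2: "\<C> = {X. is_rep Q X \<and> (\<forall>i. 0 < i \<and> i < n \<longrightarrow> (\<forall>C\<in>\<C>. ext_zero Q i C X))}"
    using ct unfolding n_cluster_tilting_def by blast+
  have Prep: "is_rep Q P" using P by (simp add: is_projective_def)
  have PC: "P \<in> \<C>" by (subst C1) (use Prep proj_ext[OF P] in auto)
  have IC: "I \<in> \<C>"
  proof (subst C2, intro CollectI conjI Irep allI impI ballI)
    fix i C assume i: "0 < i \<and> i < n" and C: "C \<in> \<C>"
    have "ext_zero Q i C P" using PC C i by (subst (asm) C2) auto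
    thus "ext_zero Q i C I" using inj_ext[OF I] i by blast
  qed
  have "ext_zero Q 1 I P" using IC PC n by (subst (asm) C1) auto
  thus False using ns by (simp add: One_nat_def)
qed


lemma sum_delta_r[simp]: "finite S \<Longrightarrow> (\<Sum>s\<in>S. f s * (if s = t then 1 else 0)) = (if t \<in> S then f t else (0::'k::field))"
  by (simp add: if_distrib[of "\<lambda>x. f _ * x"] sum.delta cong: if_cong)

lemma sum_delta_l[simp]: "finite S \<Longrightarrow> (\<Sum>s\<in>S. (if s = t then 1 else 0) * f s) = (if t \<in> S then f t else (0::'k::field))"
  by (simp add: if_distrib[of "\<lambda>x. x * f _"] sum.delta cong: if_cong)

lemma std_mult: "A \<in> carrier_mat n m \<Longrightarrow> x \<in> carrier_vec m \<Longrightarrow> i < n \<Longrightarrow>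
  vent {..<n} (A *\<^sub>v x) i = (\<Sum>l<m. ent {..<n} {..<m} A i l * vent {..<m} x l)"
  using vent_mult[of "{..<n}" "{..<m}" A x i] by simp

lemma std_ent_mult: "A \<in> carrier_mat n m \<Longrightarrow> B \<in> carrier_mat m (card C) \<Longrightarrow> finite C \<Longrightarrow> i < n \<Longrightarrow> c \<in> C \<Longrightarrow>
  ent {..<n} C (A * B) i c = (\<Sum>l<m. ent {..<n} {..<m} A i l * ent {..<m} C B l c)"
  using ent_mult[of "{..<n}" "{..<m}" C A B i c] by simp

lemma zero_mat_mult_vec[simp]: "x \<in> carrier_vec m \<Longrightarrow> 0\<^sub>m n m *\<^sub>v x = 0\<^sub>v n"
  by (intro eq_vecI) (auto simp: scalar_prod_def)

lemma vent_zero_std[simp]: "i < n \<Longrightarrow> vent {..<n} (0\<^sub>v n) i = 0"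
  unfolding vent_def using idx_less[of "{..<n}" i] by simp

context
  fixes Q :: "('v, 'a) quiver"
  assumes fq: "finite_quiver Q"
begin

lemma fin_arrs: "finite (arrs Q)" using fq by (simp add: finite_quiver_def)
lemma src_in: "c \<in> arrs Q \<Longrightarrow> src Q c \<in> verts Q" using fq by (simp add: finite_quiver_def)
lemma tgt_in: "c \<in> arrs Q \<Longrightarrow> tgt Q c \<in> verts Q" using fq by (simp add: finite_quiver_def)

definition BP :: "'v \<Rightarrow> 'v \<Rightarrow> 'a option set" where
  "BP v y = (if y = v then {None} else {}) \<union> Some ` {d \<in> arrs Q. src Q d = v \<and> tgt Q d = y}"

lemma BP_fin[simp]: "finite (BP v y)"
  unfolding BP_def using fin_arrs by auto

lemma BP_None[simp]: "None \<in> BP v y \<longleftrightarrow> y = v" unfolding BP_def by auto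
lemma BP_Some[simp]: "Some d \<in> BP v y \<longleftrightarrow> d \<in> arrs Q \<and> src Q d = v \<and> tgt Q d = y"
  unfolding BP_def by auto

definition actP :: "'v \<Rightarrow> 'a \<Rightarrow> 'a option \<Rightarrow> 'a option \<Rightarrow> 'k::field" where
  "actP v c p' p = (if src Q c = v \<and> p = None \<and> p' = Some c then 1 else 0)"

definition Prep :: "'v \<Rightarrow> ('v, 'a, 'k::field) rep" where
  "Prep v = \<lparr>rdim = (\<lambda>y. card (BP v y)), rmap = (\<lambda>c. bmat (BP v (tgt Q c)) (BP v (src Q c)) (actP v c))\<rparr>"

lemma Prep_simps[simp]: "rdim (Prep v) y = card (BP v y)"
  "rmap (Prep v) c = bmat (BP v (tgt Q c)) (BP v (src Q c)) (actP v c)"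
  unfolding Prep_def by simp_all

lemma Prep_rep: "is_rep Q (Prep v :: ('v, 'a, 'k::field) rep)"
  unfolding is_rep_def
proof (intro conjI ballI impI)
  fix a b assume a: "a \<in> arrs Q" and b: "b \<in> arrs Q" and ab: "tgt Q a = src Q b"
  show "rmap (Prep v :: ('v, 'a, 'k) rep) b * rmap (Prep v) a = 0\<^sub>m (rdim (Prep v :: ('v, 'a, 'k) rep) (tgt Q b)) (rdim (Prep v :: ('v, 'a, 'k) rep) (src Q a))"
  proof (rule ent_eqI[of "BP v (tgt Q b)" "BP v (src Q a)"])
    fix r c assume r: "r \<in> BP v (tgt Q b)" and c: "c \<in> BP v (src Q a)"
    have "ent (BP v (tgt Q b)) (BP v (src Q a)) (rmap (Prep v :: ('v, 'a, 'k) rep) b * rmap (Prep v) a) r c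
      = (\<Sum>s\<in>BP v (tgt Q a). actP v b r s * actP v a s c)"
      using r c ab by (simp add: ent_mult[of _ "BP v (tgt Q a)"])
    also have "\<dots> = (0::'k)"
      by (rule sum.neutral) (auto simp: actP_def)
    finally show "ent (BP v (tgt Q b)) (BP v (src Q a)) (rmap (Prep v :: ('v, 'a, 'k) rep) b * rmap (Prep v) a) r c =
      ent (BP v (tgt Q b)) (BP v (src Q a)) (0\<^sub>m (rdim (Prep v :: ('v, 'a, 'k) rep) (tgt Q b)) (rdim (Prep v :: ('v, 'a, 'k) rep) (src Q a))) r c"
      using r c by simp
  qed (use ab in \<open>auto intro!: mult_carrier_mat[OF bmat_carrier]\<close>)
qed auto
lemma Prep_proj:
  assumes v: "v \<in> verts Q"
  shows "is_projective Q (Prep v :: ('v, 'a, 'k::field) rep)"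
  unfolding is_projective_def
proof (intro conjI allI impI Prep_rep)
  fix X Y :: "('v, 'a, 'k) rep" and g h
  assume "is_rep Q X \<and> is_rep Q Y \<and> is_hom Q X Y g \<and> hom_surjective Q X Y g \<and> is_hom Q (Prep v) Y h"
  hence X: "is_rep Q X" and Y: "is_rep Q Y" and g: "is_hom Q X Y g" and gs: "hom_surjective Q X Y g"
    and h: "is_hom Q (Prep v) Y h" by auto
  have Xc: "\<And>c. c \<in> arrs Q \<Longrightarrow> rmap X c \<in> carrier_mat (rdim X (tgt Q c)) (rdim X (src Q c))"
    using X by (simp add: is_rep_def)
  have Yc: "\<And>c. c \<in> arrs Q \<Longrightarrow> rmap Y c \<in> carrier_mat (rdim Y (tgt Q c)) (rdim Y (src Q c))"
    using Y by (simp add: is_rep_def)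
  have X0: "\<And>a b. a \<in> arrs Q \<Longrightarrow> b \<in> arrs Q \<Longrightarrow> tgt Q a = src Q b \<Longrightarrow>
        rmap X b * rmap X a = 0\<^sub>m (rdim X (tgt Q b)) (rdim X (src Q a))"
    using X by (simp add: is_rep_def)
  have gc: "\<And>y. y \<in> verts Q \<Longrightarrow> g y \<in> carrier_mat (rdim Y y) (rdim X y)"
   and gh: "\<And>c. c \<in> arrs Q \<Longrightarrow> g (tgt Q c) * rmap X c = rmap Y c * g (src Q c)"
    using g by (auto simp: is_hom_def)
  have hc: "\<And>y. y \<in> verts Q \<Longrightarrow> h y \<in> carrier_mat (rdim Y y) (card (BP v y))"
   and hh: "\<And>c. c \<in> arrs Q \<Longrightarrow> h (tgt Q c) * bmat (BP v (tgt Q c)) (BP v (src Q c)) (actP v c)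
        = rmap Y c * h (src Q c)"
    using h by (auto simp: is_hom_def)
  define yv where "yv = col (h v) (idx (BP v v) None)"
  have yv: "yv \<in> carrier_vec (rdim Y v)" unfolding yv_def using hc[OF v] by (intro col_carrier_vec[of _ "card (BP v v)"]) simp_all
  obtain x0 where x0: "x0 \<in> carrier_vec (rdim X v)" and gx0: "g v *\<^sub>v x0 = yv"
    using gs v yv unfolding hom_surjective_def by blast
  define H where "H = (\<lambda>y. bmat {..<rdim X y} (BP v y) (\<lambda>i \<beta>. case \<beta> of None \<Rightarrow> vent {..<rdim X y} x0 i
         | Some d \<Rightarrow> vent {..<rdim X y} (rmap X d *\<^sub>v x0) i) :: 'k mat)"
  have Hc: "\<And>y. H y \<in> carrier_mat (rdim X y) (card (BP v y))"
    unfolding H_def using bmat_carrier[of "{..<rdim X _}" "BP v _"] by (simp only: card_lessThan)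
  have HN: "\<And>l. l < rdim X v \<Longrightarrow> ent {..<rdim X v} (BP v v) (H v) l None = vent {..<rdim X v} x0 l"
    unfolding H_def by simp
  have HS: "\<And>l d y. l < rdim X y \<Longrightarrow> Some d \<in> BP v y \<Longrightarrow>
      ent {..<rdim X y} (BP v y) (H y) l (Some d) = vent {..<rdim X y} (rmap X d *\<^sub>v x0) l"
    unfolding H_def by simp
  have "is_hom Q X (Prep v) H \<longrightarrow> True" by simp
  have Hhom: "is_hom Q (Prep v) X H"
    unfolding is_hom_def
  proof (intro conjI ballI)
    fix y show "H y \<in> carrier_mat (rdim X y) (rdim (Prep v :: ('v, 'a, 'k) rep) y)" using Hc by simp
  next
    fix c assume c: "c \<in> arrs Q"
    let ?S = "src Q c" and ?T = "tgt Q c"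
    show "H ?T * rmap (Prep v) c = rmap X c * H ?S"
    proof (rule ent_eqI[of "{..<rdim X ?T}" "BP v ?S"])
      show "H ?T * rmap (Prep v) c \<in> carrier_mat (card {..<rdim X ?T}) (card (BP v ?S))"
        using Hc by (auto intro!: mult_carrier_mat)
      show "rmap X c * H ?S \<in> carrier_mat (card {..<rdim X ?T}) (card (BP v ?S))"
        using Hc Xc[OF c] by (auto intro!: mult_carrier_mat)
    next
      fix i \<beta> assume i: "i \<in> {..<rdim X ?T}" and \<beta>: "\<beta> \<in> BP v ?S"
      have L: "ent {..<rdim X ?T} (BP v ?S) (H ?T * rmap (Prep v) c) i \<beta>
          = (\<Sum>\<beta>'\<in>BP v ?T. ent {..<rdim X ?T} (BP v ?T) (H ?T) i \<beta>' * actP v c \<beta>' \<beta>)"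
        using i \<beta> Hc[of ?T] by (simp add: ent_mult[of _ "BP v ?T"])
      have R: "ent {..<rdim X ?T} (BP v ?S) (rmap X c * H ?S) i \<beta>
          = (\<Sum>l<rdim X ?S. ent {..<rdim X ?T} {..<rdim X ?S} (rmap X c) i l * ent {..<rdim X ?S} (BP v ?S) (H ?S) l \<beta>)"
        using i \<beta> Hc[of ?S] Xc[OF c] by (simp add: std_ent_mult)
      show "ent {..<rdim X ?T} (BP v ?S) (H ?T * rmap (Prep v) c) i \<beta> = ent {..<rdim X ?T} (BP v ?S) (rmap X c * H ?S) i \<beta>"
      proof (cases \<beta>)
        case None
        hence S: "?S = v" using \<beta> by simp
        have "ent {..<rdim X ?T} (BP v ?S) (H ?T * rmap (Prep v) c) i \<beta> = ent {..<rdim X ?T} (BP v ?T) (H ?T) i (Some c)"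
          unfolding L using None S c by (simp add: actP_def)
        also have "\<dots> = vent {..<rdim X ?T} (rmap X c *\<^sub>v x0) i" using HS i c S by simp
        also have "\<dots> = ent {..<rdim X ?T} (BP v ?S) (rmap X c * H ?S) i \<beta>"
          unfolding R using i S x0 Xc[OF c] HN None by (simp add: std_mult)
        finally show ?thesis .
      next
        case (Some d)
        hence d: "d \<in> arrs Q" "src Q d = v" "tgt Q d = ?S" using \<beta> by auto
        have HSd: "\<And>l. l < rdim X ?S \<Longrightarrow> ent {..<rdim X ?S} (BP v ?S) (H ?S) l (Some d) = vent {..<rdim X ?S} (rmap X d *\<^sub>v x0) l"
          by (rule HS) (use \<beta> Some in auto)
        have "ent {..<rdim X ?T} (BP v ?S) (H ?T * rmap (Prep v) c) i \<beta> = 0"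
          unfolding L using Some by (simp add: actP_def)
        also have "0 = vent {..<rdim X ?T} ((rmap X c * rmap X d) *\<^sub>v x0) i"
          using X0[OF d(1) c] d x0 i by simp
        also have "\<dots> = vent {..<rdim X ?T} (rmap X c *\<^sub>v (rmap X d *\<^sub>v x0)) i"
          using Xc[OF c] Xc[OF d(1)] d x0 by (simp add: assoc_mult_mat_vec[of _ _ "rdim X ?S" _ "rdim X v"])
        also have "\<dots> = ent {..<rdim X ?T} (BP v ?S) (rmap X c * H ?S) i \<beta>"
          unfolding R using i x0 Xc[OF c] Xc[OF d(1)] d Some \<beta>
          by (simp add: std_mult[of _ _ "rdim X ?S"]) (intro sum.cong refl, simp add: HSd)
        finally show ?thesis .
      qed
    qed simp_all
  qed
  have Heq: "hom_eq Q (hom_comp g H) h"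
    unfolding hom_eq_def hom_comp_def
  proof (intro ballI)
    fix y assume y: "y \<in> verts Q"
    show "g y * H y = h y"
    proof (rule ent_eqI[of "{..<rdim Y y}" "BP v y"])
      show "g y * H y \<in> carrier_mat (card {..<rdim Y y}) (card (BP v y))"
        using Hc gc[OF y] by (auto intro!: mult_carrier_mat)
      show "h y \<in> carrier_mat (card {..<rdim Y y}) (card (BP v y))" using hc[OF y] by simp
    next
      fix i \<beta> assume i: "i \<in> {..<rdim Y y}" and \<beta>: "\<beta> \<in> BP v y"
      have L: "ent {..<rdim Y y} (BP v y) (g y * H y) i \<beta>
          = (\<Sum>l<rdim X y. ent {..<rdim Y y} {..<rdim X y} (g y) i l * ent {..<rdim X y} (BP v y) (H y) l \<beta>)"
        using i \<beta> Hc[of y] gc[OF y] by (simp add: std_ent_mult)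
      show "ent {..<rdim Y y} (BP v y) (g y * H y) i \<beta> = ent {..<rdim Y y} (BP v y) (h y) i \<beta>"
      proof (cases \<beta>)
        case None
        hence yv': "y = v" using \<beta> by simp
        have "ent {..<rdim Y y} (BP v y) (g y * H y) i \<beta> = vent {..<rdim Y y} (g v *\<^sub>v x0) i"
          unfolding L using yv' None HN i x0 gc[OF v] by (simp add: std_mult)
        also have "\<dots> = ent {..<rdim Y y} (BP v y) (h y) i \<beta>"
          unfolding gx0 yv_def using yv' None hc[OF v] i
          by (simp add: ent_col[of "{..<rdim Y v}" "BP v v", simplified])
        finally show ?thesis .
      next
        case (Some d)
        hence d: "d \<in> arrs Q" "src Q d = v" "tgt Q d = y" using \<beta> by auto
        have "ent {..<rdim Y y} (BP v y) (g y * H y) i \<beta> = vent {..<rdim Y y} (g y *\<^sub>v (rmap X d *\<^sub>v x0)) i"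
          unfolding L using Some \<beta> i x0 gc[OF y] Xc[OF d(1)] d
          by (simp add: std_mult[of _ _ "rdim X y"]) (intro sum.cong refl, use HS \<beta> Some in auto)
        also have "\<dots> = vent {..<rdim Y y} ((g y * rmap X d) *\<^sub>v x0) i"
          using gc[OF y] Xc[OF d(1)] d x0 by simp
        also have "\<dots> = vent {..<rdim Y y} ((rmap Y d * g v) *\<^sub>v x0) i"
          using gh[OF d(1)] d by simp
        also have "\<dots> = vent {..<rdim Y y} (rmap Y d *\<^sub>v yv) i"
          using gx0 Yc[OF d(1)] gc[OF v] d x0 by simp
        also have "\<dots> = (\<Sum>l<rdim Y v. ent {..<rdim Y y} {..<rdim Y v} (rmap Y d) i l * ent {..<rdim Y v} (BP v v) (h v) l None)"
          using Yc[OF d(1)] d yv i hc[OF v] unfolding yv_def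
          by (simp add: std_mult ent_col[of "{..<rdim Y v}" "BP v v", simplified])
        also have "\<dots> = ent {..<rdim Y y} (BP v v) (rmap Y d * h v) i None"
          using Yc[OF d(1)] d i hc[OF v] by (simp add: std_ent_mult)
        also have "\<dots> = ent {..<rdim Y y} (BP v v) (h y * bmat (BP v y) (BP v v) (actP v d)) i None"
          using hh[OF d(1)] d by simp
        also have "\<dots> = (\<Sum>\<beta>'\<in>BP v y. ent {..<rdim Y y} (BP v y) (h y) i \<beta>' * actP v d \<beta>' None)"
          using hc[OF y] i by (simp add: ent_mult[of _ "BP v y"])
        also have "\<dots> = ent {..<rdim Y y} (BP v y) (h y) i \<beta>"
          using Some d by (simp add: actP_def)
        finally show ?thesis .
      qed
    qed simp_all
  qed
  show "\<exists>h'. is_hom Q (Prep v) X h' \<and> hom_eq Q (hom_comp g h') h" using Hhom Heq by blast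
qed

end


lemma mult_unit_col: fixes A :: "'a::field mat" shows "A \<in> carrier_mat n m \<Longrightarrow> j < m \<Longrightarrow> A *\<^sub>v unit_vec m j = col A j"
proof (intro eq_vecI)
  fix i assume A: "A \<in> carrier_mat n m" and j: "j < m" and i: "i < dim_vec (col A j)"
  have "row A i \<bullet> unit_vec m j = (\<Sum>k\<in>{0..<m}. A $$ (i, k) * (if k = j then 1 else 0))"
    unfolding scalar_prod_def using A i j by (intro sum.cong) auto
  also have "\<dots> = A $$ (i, j)" using j by (simp add: sum.delta if_distrib[of "\<lambda>x. _ * x"] cong: if_cong)
  finally show "(A *\<^sub>v unit_vec m j) $ i = col A j $ i" using A i j by simp
qed auto

lemma right_inv:
  fixes g :: "'a::field mat"
  assumes g: "g \<in> carrier_mat m n" and s: "\<forall>y\<in>carrier_vec m. \<exists>x\<in>carrier_vec n. g *\<^sub>v x = y"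
  shows "\<exists>G\<in>carrier_mat n m. g * G = 1\<^sub>m m"
proof -
  define xs where "xs j = (SOME x. x \<in> carrier_vec n \<and> g *\<^sub>v x = unit_vec m j)" for j
  have xs: "xs j \<in> carrier_vec n \<and> g *\<^sub>v xs j = unit_vec m j" for j
    unfolding xs_def using s unit_vec_carrier[of m j] by (metis (mono_tags, lifting) someI_ex)
  define G where "G = mat n m (\<lambda>(i,j). xs j $ i)"
  have Gc: "G \<in> carrier_mat n m" unfolding G_def by simp
  have colG: "j < m \<Longrightarrow> col G j = xs j" for j
    unfolding G_def using xs[of j] by (intro eq_vecI) auto
  have "g * G = 1\<^sub>m m"
  proof (rule mat_col_eqI)
    fix j assume "j < dim_col (1\<^sub>m m :: 'a mat)"
    hence j: "j < m" by simp
    show "col (g * G) j = col (1\<^sub>m m) j" using col_mult2[OF g Gc j] colG[OF j] xs[of j] j by simp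
  qed (use g Gc in auto)
  thus ?thesis using Gc by blast
qed

lemma left_inv:
  fixes F :: "'a::field mat"
  assumes F: "F \<in> carrier_mat d r" and inj: "\<forall>x\<in>carrier_vec r. F *\<^sub>v x = 0\<^sub>v d \<longrightarrow> x = 0\<^sub>v r"
  shows "\<exists>L\<in>carrier_mat r d. L * F = 1\<^sub>m r"
proof -
  obtain C where gj: "gauss_jordan_single F = C" by auto
  note G = gauss_jordan_single[OF F gj]
  have Cc: "C \<in> carrier_mat d r" and ref: "row_echelon_form C" using G by auto
  obtain P Q' where CPF: "C = P * F" and P: "P \<in> carrier_mat d d" using G(4) by blast
  obtain f where piv: "pivot_fun C f r" using ref Cc unfolding row_echelon_form_def by auto
  have allpiv: "snd ` set (pivot_positions C) = {0..<r}"
  proof (rule ccontr)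
    assume "snd ` set (pivot_positions C) \<noteq> {0..<r}"
    note fb = find_base_vector[OF ref Cc this]
    have "F *\<^sub>v find_base_vector C = 0\<^sub>v d" using G(1)[OF fb(1)] fb(3) by simp
    thus False using inj fb(1,2) by blast
  qed
  have ex: "\<exists>i. i < d \<and> f i = j" if j: "j < r" for j
  proof -
    have "j \<in> snd ` set (pivot_positions C)" using allpiv j by simp
    thus ?thesis unfolding pivot_positions[OF Cc piv] by auto
  qed
  define \<iota> where "\<iota> j = (SOME i. i < d \<and> f i = j)" for j
  have \<iota>: "j < r \<Longrightarrow> \<iota> j < d \<and> f (\<iota> j) = j" for j unfolding \<iota>_def using ex by (metis (mono_tags, lifting) someI_ex)
  note pd = pivot_funD[OF _ piv, of d]
  define L where "L = mat r d (\<lambda>(a,b). P $$ (\<iota> a, b))"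
  have Lc: "L \<in> carrier_mat r d" unfolding L_def by simp
  have "L * F = 1\<^sub>m r"
  proof (rule eq_matI)
    fix a b assume a: "a < dim_row (1\<^sub>m r :: 'a mat)" and b: "b < dim_col (1\<^sub>m r :: 'a mat)"
    hence a: "a < r" and b: "b < r" by auto
    have rowL: "row L a = row P (\<iota> a)" unfolding L_def using a \<iota>[OF a] P by (intro eq_vecI) auto
    have "(L * F) $$ (a, b) = row P (\<iota> a) \<bullet> col F b" using a b Lc F rowL by simp
    also have "\<dots> = C $$ (\<iota> a, b)" unfolding CPF using \<iota>[OF a] b P F by simp
    also have "\<dots> = (if a = b then 1 else 0)"
    proof -
      have fb: "f (\<iota> b) = b" "\<iota> b < d" using \<iota>[OF b] by auto
      have fr: "f (\<iota> b) < r" using fb b by simp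
      show ?thesis
      proof (cases "a = b")
        case True thus ?thesis using pd(4)[OF _ fb(2) fr] Cc fb by auto
      next
        case False
        hence "\<iota> a \<noteq> \<iota> b" using \<iota>[OF a] \<iota>[OF b] by metis
        thus ?thesis using pd(5)[OF _ fb(2) fr] Cc fb \<iota>[OF a] False by auto
      qed
    qed
    finally show "(L * F) $$ (a, b) = 1\<^sub>m r $$ (a, b)" using a b by simp
  qed (use Lc F in auto)
  thus ?thesis using Lc by blast
qed

lemma mmd: "A \<in> carrier_mat n m \<Longrightarrow> B \<in> carrier_mat n m \<Longrightarrow> C \<in> carrier_mat m k \<Longrightarrow> (A - B) * C = A * C - B * C"
  for A :: "'a::field mat" by (rule minus_mult_distrib_mat)
lemma mmd2: "A \<in> carrier_mat n m \<Longrightarrow> B \<in> carrier_mat m k \<Longrightarrow> C \<in> carrier_mat m k \<Longrightarrow> A * (B - C) = A * B - A * C"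
  for A :: "'a::field mat" by (rule mult_minus_distrib_mat)
lemma mad2: "A \<in> carrier_mat n m \<Longrightarrow> B \<in> carrier_mat m k \<Longrightarrow> C \<in> carrier_mat m k \<Longrightarrow> A * (B + C) = A * B + A * C"
  for A :: "'a::field mat" by (rule mult_add_distrib_mat)

lemma col_zero_mat: "j < m \<Longrightarrow> col (0\<^sub>m n m) j = 0\<^sub>v n" by (intro eq_vecI) auto

lemma retr_sec:
  fixes Q :: "('v, 'a) quiver" and X E Z :: "('v, 'a, 'k::field) rep"
  assumes S: "ses Q X E Z f g" and r: "is_hom Q E X r"
    and rf: "\<forall>w\<in>verts Q. r w * f w = 1\<^sub>m (rdim X w)"
    and fq: "finite_quiver Q"
  shows "\<exists>s. is_hom Q Z E s \<and> hom_eq Q (hom_comp g s) (hom_id Z)"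
proof -
  have X: "is_rep Q X" and E: "is_rep Q E" and Zr: "is_rep Q Z" and f: "is_hom Q X E f" and g: "is_hom Q E Z g"
    and gs: "hom_surjective Q E Z g"
    and ex: "\<And>w y. w \<in> verts Q \<Longrightarrow> y \<in> carrier_vec (rdim E w) \<Longrightarrow>
        (g w *\<^sub>v y = 0\<^sub>v (rdim Z w)) = (\<exists>x\<in>carrier_vec (rdim X w). f w *\<^sub>v x = y)"
    using S unfolding ses_def by auto
  have fc: "\<And>w. w \<in> verts Q \<Longrightarrow> f w \<in> carrier_mat (rdim E w) (rdim X w)"
   and fh: "\<And>c. c \<in> arrs Q \<Longrightarrow> f (tgt Q c) * rmap X c = rmap E c * f (src Q c)"
    using f by (auto simp: is_hom_def)
  have gc: "\<And>w. w \<in> verts Q \<Longrightarrow> g w \<in> carrier_mat (rdim Z w) (rdim E w)"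
   and gh: "\<And>c. c \<in> arrs Q \<Longrightarrow> g (tgt Q c) * rmap E c = rmap Z c * g (src Q c)"
    using g by (auto simp: is_hom_def)
  have rc: "\<And>w. w \<in> verts Q \<Longrightarrow> r w \<in> carrier_mat (rdim X w) (rdim E w)"
   and rh: "\<And>c. c \<in> arrs Q \<Longrightarrow> r (tgt Q c) * rmap E c = rmap X c * r (src Q c)"
    using r by (auto simp: is_hom_def)
  have Xc: "\<And>c. c \<in> arrs Q \<Longrightarrow> rmap X c \<in> carrier_mat (rdim X (tgt Q c)) (rdim X (src Q c))"
    using X by (simp add: is_rep_def)
  have Ec: "\<And>c. c \<in> arrs Q \<Longrightarrow> rmap E c \<in> carrier_mat (rdim E (tgt Q c)) (rdim E (src Q c))"
    using E by (simp add: is_rep_def)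
  have Zc: "\<And>c. c \<in> arrs Q \<Longrightarrow> rmap Z c \<in> carrier_mat (rdim Z (tgt Q c)) (rdim Z (src Q c))"
    using Zr by (simp add: is_rep_def)
  have st: "\<And>c. c \<in> arrs Q \<Longrightarrow> src Q c \<in> verts Q \<and> tgt Q c \<in> verts Q"
    using fq by (simp add: finite_quiver_def)
  have gf: "\<And>w. w \<in> verts Q \<Longrightarrow> g w * f w = 0\<^sub>m (rdim Z w) (rdim X w)"
  proof -
    fix w assume w: "w \<in> verts Q"
    show "g w * f w = 0\<^sub>m (rdim Z w) (rdim X w)"
    proof (rule mat_col_eqI)
      fix j assume "j < dim_col (0\<^sub>m (rdim Z w) (rdim X w) :: 'k mat)"
      hence j: "j < rdim X w" by simp
      have "col (g w * f w) j = g w *\<^sub>v (f w *\<^sub>v unit_vec (rdim X w) j)"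
        using col_mult2[OF gc[OF w] fc[OF w] j] mult_unit_col[OF fc[OF w] j] by simp
      also have "\<dots> = 0\<^sub>v (rdim Z w)"
        using ex[OF w, of "f w *\<^sub>v unit_vec (rdim X w) j"] fc[OF w] by auto
      finally show "col (g w * f w) j = col (0\<^sub>m (rdim Z w) (rdim X w)) j" using j by (simp add: col_zero_mat)
    qed (use gc fc w in auto)
  qed
  define G where "G w = (SOME G. G \<in> carrier_mat (rdim E w) (rdim Z w) \<and> g w * G = 1\<^sub>m (rdim Z w))" for w
  have G: "\<And>w. w \<in> verts Q \<Longrightarrow> G w \<in> carrier_mat (rdim E w) (rdim Z w) \<and> g w * G w = 1\<^sub>m (rdim Z w)"
  proof -
    fix w assume w: "w \<in> verts Q"
    have "\<exists>G\<in>carrier_mat (rdim E w) (rdim Z w). g w * G = 1\<^sub>m (rdim Z w)"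
      by (rule right_inv[OF gc[OF w]]) (use gs w in \<open>auto simp: hom_surjective_def\<close>)
    thus "G w \<in> carrier_mat (rdim E w) (rdim Z w) \<and> g w * G w = 1\<^sub>m (rdim Z w)"
      unfolding G_def by (metis (mono_tags, lifting) someI_ex)
  qed
  have Gc: "\<And>w. w \<in> verts Q \<Longrightarrow> G w \<in> carrier_mat (rdim E w) (rdim Z w)"
   and Gi: "\<And>w. w \<in> verts Q \<Longrightarrow> g w * G w = 1\<^sub>m (rdim Z w)" using G by auto
  define \<pi> where "\<pi> w = 1\<^sub>m (rdim E w) - f w * r w" for w
  have \<pi>c: "\<And>w. w \<in> verts Q \<Longrightarrow> \<pi> w \<in> carrier_mat (rdim E w) (rdim E w)"
    unfolding \<pi>_def using fc rc by (meson minus_carrier_mat mult_carrier_mat one_carrier_mat)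
  have \<pi>f: "\<And>w. w \<in> verts Q \<Longrightarrow> \<pi> w * f w = 0\<^sub>m (rdim E w) (rdim X w)"
  proof -
    fix w assume w: "w \<in> verts Q"
    have "\<pi> w * f w = f w - f w * r w * f w"
      unfolding \<pi>_def using fc[OF w] rc[OF w] by (simp add: mmd[OF one_carrier_mat mult_carrier_mat[OF fc[OF w] rc[OF w]] fc[OF w]])
    also have "f w * r w * f w = f w" using fc[OF w] rc[OF w] rf w by simp
    finally show "\<pi> w * f w = 0\<^sub>m (rdim E w) (rdim X w)" using fc[OF w] by simp
  qed
  define s where "s w = \<pi> w * G w" for w
  have sc: "\<And>w. w \<in> verts Q \<Longrightarrow> s w \<in> carrier_mat (rdim E w) (rdim Z w)"
    unfolding s_def using \<pi>c G by (meson mult_carrier_mat)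
  have shom: "is_hom Q Z E s"
    unfolding is_hom_def
  proof (intro conjI ballI sc)
    fix c assume c: "c \<in> arrs Q"
    define S where "S = src Q c"
    define T where "T = tgt Q c"
    have SV: "S \<in> verts Q" and TV: "T \<in> verts Q" using st[OF c] unfolding S_def T_def by auto
    have Ec': "rmap E c \<in> carrier_mat (rdim E T) (rdim E S)" using Ec[OF c] unfolding S_def T_def .
    have Xc': "rmap X c \<in> carrier_mat (rdim X T) (rdim X S)" using Xc[OF c] unfolding S_def T_def .
    have Zc': "rmap Z c \<in> carrier_mat (rdim Z T) (rdim Z S)" using Zc[OF c] unfolding S_def T_def .
    have fh': "f T * rmap X c = rmap E c * f S" using fh[OF c] unfolding S_def T_def .
    have gh': "g T * rmap E c = rmap Z c * g S" using gh[OF c] unfolding S_def T_def .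
    have rh': "r T * rmap E c = rmap X c * r S" using rh[OF c] unfolding S_def T_def .
    note cs = fc[OF SV] fc[OF TV] rc[OF SV] rc[OF TV] gc[OF SV] gc[OF TV] Ec' Xc' Zc'
      Gc[OF SV] Gc[OF TV] Gi[OF SV] Gi[OF TV] \<pi>c[OF SV] \<pi>c[OF TV]
    have \<pi>E: "\<pi> T * rmap E c = rmap E c * \<pi> S"
    proof -
      have "\<pi> T * rmap E c = rmap E c - f T * r T * rmap E c"
        unfolding \<pi>_def using cs by (simp add: mmd[OF one_carrier_mat mult_carrier_mat[OF fc[OF TV] rc[OF TV]] Ec'])
      also have "f T * r T * rmap E c = f T * (r T * rmap E c)" using cs by simp
      also have "\<dots> = f T * (rmap X c * r S)" using rh' by simp
      also have "\<dots> = (f T * rmap X c) * r S" using cs by simp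
      also have "\<dots> = rmap E c * f S * r S" using fh' by simp
      also have "rmap E c - \<dots> = rmap E c * \<pi> S"
        unfolding \<pi>_def using cs by (simp add: mmd2[OF Ec' one_carrier_mat mult_carrier_mat[OF fc[OF SV] rc[OF SV]]])
      finally show ?thesis .
    qed
    define D where "D = rmap E c * G S - G T * rmap Z c"
    have Dc: "D \<in> carrier_mat (rdim E T) (rdim Z S)" unfolding D_def using cs by auto
    have gD: "g T * D = 0\<^sub>m (rdim Z T) (rdim Z S)"
    proof -
      have "g T * D = g T * (rmap E c * G S) - g T * (G T * rmap Z c)"
        unfolding D_def using cs by (simp add: mmd2[OF gc[OF TV] mult_carrier_mat[OF Ec' Gc[OF SV]] mult_carrier_mat[OF Gc[OF TV] Zc']])
      also have "g T * (rmap E c * G S) = (g T * rmap E c) * G S" using cs by simp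
      also have "\<dots> = rmap Z c * (g S * G S)" unfolding gh' using cs by simp
      also have "\<dots> = rmap Z c" using cs by simp
      also have "g T * (G T * rmap Z c) = (g T * G T) * rmap Z c"
        by (rule assoc_mult_mat[OF gc[OF TV] Gc[OF TV] Zc', symmetric])
      also have "\<dots> = rmap Z c" unfolding Gi[OF TV] using Zc' by simp
      finally show ?thesis using cs by simp
    qed
    have \<pi>D: "\<pi> T * D = 0\<^sub>m (rdim E T) (rdim Z S)"
    proof (rule mat_col_eqI)
      fix j assume "j < dim_col (0\<^sub>m (rdim E T) (rdim Z S) :: 'k mat)"
      hence j: "j < rdim Z S" by simp
      have cD: "col D j \<in> carrier_vec (rdim E T)" using Dc j by simp
      have "g T *\<^sub>v col D j = col (g T * D) j" using col_mult2[OF gc[OF TV] Dc j] by simp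
      also have "\<dots> = 0\<^sub>v (rdim Z T)" using gD j by (simp add: col_zero_mat)
      finally obtain x where x: "x \<in> carrier_vec (rdim X T)" and fx: "f T *\<^sub>v x = col D j"
        using ex[OF TV cD] by auto
      have "col (\<pi> T * D) j = \<pi> T *\<^sub>v (f T *\<^sub>v x)" using col_mult2[OF \<pi>c[OF TV] Dc j] fx by simp
      also have "\<dots> = (\<pi> T * f T) *\<^sub>v x" using cs x by simp
      also have "\<dots> = 0\<^sub>v (rdim E T)" using \<pi>f[OF TV] x by simp
      finally show "col (\<pi> T * D) j = col (0\<^sub>m (rdim E T) (rdim Z S)) j" using j by (simp add: col_zero_mat)
    qed (use cs Dc in auto)
    have "rmap E c * s S = \<pi> T * rmap E c * G S" unfolding s_def using cs \<pi>E by simp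
    also have "\<dots> = \<pi> T * (rmap E c * G S)" using cs by simp
    also have "rmap E c * G S = D + G T * rmap Z c" unfolding D_def using cs by (intro eq_matI) auto
    also have "\<pi> T * (D + G T * rmap Z c) = \<pi> T * D + \<pi> T * (G T * rmap Z c)"
      using cs Dc by (simp add: mad2[OF \<pi>c[OF TV] Dc mult_carrier_mat[OF Gc[OF TV] Zc']])
    also have "\<dots> = s T * rmap Z c" unfolding \<pi>D s_def using cs by simp
    finally show "s (tgt Q c) * rmap Z c = rmap E c * s (src Q c)" unfolding S_def T_def by simp
  qed
  have seq: "hom_eq Q (hom_comp g s) (hom_id Z)"
    unfolding hom_eq_def hom_comp_def hom_id_def
  proof (intro ballI)
    fix w assume w: "w \<in> verts Q"
    note cs = fc[OF w] rc[OF w] gc[OF w] Gc[OF w] Gi[OF w] \<pi>c[OF w]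
    have "g w * s w = g w * \<pi> w * G w" unfolding s_def
      by (rule assoc_mult_mat[OF gc[OF w] \<pi>c[OF w] Gc[OF w], symmetric])
    also have "g w * \<pi> w = g w - g w * f w * r w"
      unfolding \<pi>_def using cs by (simp add: mmd2[OF gc[OF w] one_carrier_mat mult_carrier_mat[OF fc[OF w] rc[OF w]]])
    also have "g w * f w * r w = 0\<^sub>m (rdim Z w) (rdim E w)" using gf[OF w] cs by simp
    also have "g w - 0\<^sub>m (rdim Z w) (rdim E w) = g w" using cs by (intro eq_matI) auto
    finally show "g w * s w = 1\<^sub>m (rdim Z w)" using cs by simp
  qed
  show ?thesis using shom seq by blast
qed


context
  fixes Q :: "('v, 'a) quiver"
  assumes fq: "finite_quiver Q"
begin

definition BI :: "'v \<Rightarrow> 'v \<Rightarrow> 'a option set" where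
  "BI u y = (if y = u then {None} else {}) \<union> Some ` {b \<in> arrs Q. src Q b = y \<and> tgt Q b = u}"

lemma BI_fin[simp]: "finite (BI u y)"
  unfolding BI_def using fin_arrs[OF fq] by auto

lemma BI_None[simp]: "None \<in> BI u y \<longleftrightarrow> y = u" unfolding BI_def by auto
lemma BI_Some[simp]: "Some b \<in> BI u y \<longleftrightarrow> b \<in> arrs Q \<and> src Q b = y \<and> tgt Q b = u"
  unfolding BI_def by auto

definition actI :: "'v \<Rightarrow> 'a \<Rightarrow> 'a option \<Rightarrow> 'a option \<Rightarrow> 'k::field" where
  "actI u c i' i = (if tgt Q c = u \<and> i' = None \<and> i = Some c then 1 else 0)"

definition Irep :: "'v \<Rightarrow> ('v, 'a, 'k::field) rep" where
  "Irep u = \<lparr>rdim = (\<lambda>y. card (BI u y)), rmap = (\<lambda>c. bmat (BI u (tgt Q c)) (BI u (src Q c)) (actI u c))\<rparr>"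

lemma Irep_simps[simp]: "rdim (Irep u) y = card (BI u y)"
  "rmap (Irep u) c = bmat (BI u (tgt Q c)) (BI u (src Q c)) (actI u c)"
  unfolding Irep_def by simp_all

lemma Irep_rep: "is_rep Q (Irep u :: ('v, 'a, 'k::field) rep)"
  unfolding is_rep_def
proof (intro conjI ballI impI)
  fix a b assume a: "a \<in> arrs Q" and b: "b \<in> arrs Q" and ab: "tgt Q a = src Q b"
  show "rmap (Irep u :: ('v, 'a, 'k) rep) b * rmap (Irep u) a = 0\<^sub>m (rdim (Irep u :: ('v, 'a, 'k) rep) (tgt Q b)) (rdim (Irep u :: ('v, 'a, 'k) rep) (src Q a))"
  proof (rule ent_eqI[of "BI u (tgt Q b)" "BI u (src Q a)"])
    fix r c assume r: "r \<in> BI u (tgt Q b)" and c: "c \<in> BI u (src Q a)"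
    have "ent (BI u (tgt Q b)) (BI u (src Q a)) (rmap (Irep u :: ('v, 'a, 'k) rep) b * rmap (Irep u) a) r c
      = (\<Sum>s\<in>BI u (tgt Q a). actI u b r s * actI u a s c)"
      using r c ab by (simp add: ent_mult[of _ "BI u (tgt Q a)"])
    also have "\<dots> = (0::'k)"
      by (rule sum.neutral) (auto simp: actI_def)
    finally show "ent (BI u (tgt Q b)) (BI u (src Q a)) (rmap (Irep u :: ('v, 'a, 'k) rep) b * rmap (Irep u) a) r c =
      ent (BI u (tgt Q b)) (BI u (src Q a)) (0\<^sub>m (rdim (Irep u :: ('v, 'a, 'k) rep) (tgt Q b)) (rdim (Irep u :: ('v, 'a, 'k) rep) (src Q a))) r c"
      using r c by simp
  qed (use ab in \<open>auto intro!: mult_carrier_mat[OF bmat_carrier]\<close>)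
qed auto

lemma Irep_inj:
  assumes u: "u \<in> verts Q"
  shows "ext1_zero Q Z (Irep u :: ('v, 'a, 'k::field) rep)"
  unfolding ext1_zero_def
proof (intro allI impI)
  fix E :: "('v, 'a, 'k) rep" and f g
  assume S: "ses Q (Irep u) E Z f g"
  have E: "is_rep Q E" and f: "is_hom Q (Irep u) E f" and finj: "hom_injective Q (Irep u) f"
    using S unfolding ses_def by auto
  have fc: "\<And>w. w \<in> verts Q \<Longrightarrow> f w \<in> carrier_mat (rdim E w) (card (BI u w))"
   and fh: "\<And>c. c \<in> arrs Q \<Longrightarrow> f (tgt Q c) * bmat (BI u (tgt Q c)) (BI u (src Q c)) (actI u c) = rmap E c * f (src Q c)"
    using f by (auto simp: is_hom_def)
  have Ec: "\<And>c. c \<in> arrs Q \<Longrightarrow> rmap E c \<in> carrier_mat (rdim E (tgt Q c)) (rdim E (src Q c))"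
    using E by (simp add: is_rep_def)
  have E0: "\<And>a b. a \<in> arrs Q \<Longrightarrow> b \<in> arrs Q \<Longrightarrow> tgt Q a = src Q b \<Longrightarrow>
        rmap E b * rmap E a = 0\<^sub>m (rdim E (tgt Q b)) (rdim E (src Q a))"
    using E by (simp add: is_rep_def)
  obtain L where Lc: "L \<in> carrier_mat (card (BI u u)) (rdim E u)" and Lf: "L * f u = 1\<^sub>m (card (BI u u))"
  proof -
    have "\<exists>L\<in>carrier_mat (card (BI u u)) (rdim E u). L * f u = 1\<^sub>m (card (BI u u))"
    proof (rule left_inv[OF fc[OF u]])
      show "\<forall>x\<in>carrier_vec (card (BI u u)). f u *\<^sub>v x = 0\<^sub>v (rdim E u) \<longrightarrow> x = 0\<^sub>v (card (BI u u))"
        using finj u fc[OF u] unfolding hom_injective_def by auto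
    qed
    thus ?thesis using that by blast
  qed
  let ?N = "\<lambda>w. {..<rdim E w}"
  define r where "r w = bmat (BI u w) (?N w) (\<lambda>\<beta> l. case \<beta> of None \<Rightarrow> ent (BI u u) (?N u) L None l
      | Some b \<Rightarrow> ent (BI u u) (?N w) (L * rmap E b) None l)" for w
  have rc: "\<And>w. r w \<in> carrier_mat (card (BI u w)) (rdim E w)"
    unfolding r_def using bmat_carrier[of "BI u _" "{..<rdim E _}"] by (simp only: card_lessThan)
  have rN: "\<And>l. l < rdim E u \<Longrightarrow> ent (BI u u) (?N u) (r u) None l = ent (BI u u) (?N u) L None l"
    unfolding r_def by simp
  have rS: "\<And>l b w. l < rdim E w \<Longrightarrow> Some b \<in> BI u w \<Longrightarrow>
      ent (BI u w) (?N w) (r w) (Some b) l = ent (BI u u) (?N w) (L * rmap E b) None l"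
    unfolding r_def by simp
  have rhom: "is_hom Q E (Irep u) r"
    unfolding is_hom_def
  proof (intro conjI ballI)
    fix w show "r w \<in> carrier_mat (rdim (Irep u :: ('v, 'a, 'k) rep) w) (rdim E w)" using rc by simp
  next
    fix c assume c: "c \<in> arrs Q"
    let ?S = "src Q c" and ?T = "tgt Q c"
    show "r ?T * rmap E c = rmap (Irep u) c * r ?S"
    proof (rule ent_eqI[of "BI u ?T" "?N ?S"])
      show "r ?T * rmap E c \<in> carrier_mat (card (BI u ?T)) (card (?N ?S))"
        using rc Ec[OF c] by (auto intro!: mult_carrier_mat)
      show "rmap (Irep u) c * r ?S \<in> carrier_mat (card (BI u ?T)) (card (?N ?S))"
        using rc[of ?S] by (simp add: mult_carrier_mat[OF bmat_carrier])
    next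
      fix \<beta> l assume \<beta>: "\<beta> \<in> BI u ?T" and l: "l \<in> ?N ?S"
      have L: "ent (BI u ?T) (?N ?S) (r ?T * rmap E c) \<beta> l
          = (\<Sum>l'\<in>?N ?T. ent (BI u ?T) (?N ?T) (r ?T) \<beta> l' * ent (?N ?T) (?N ?S) (rmap E c) l' l)"
        using \<beta> l rc[of ?T] Ec[OF c] by (simp add: ent_mult[of _ "?N ?T"])
      have R: "ent (BI u ?T) (?N ?S) (rmap (Irep u) c * r ?S) \<beta> l
          = (\<Sum>\<beta>'\<in>BI u ?S. actI u c \<beta> \<beta>' * ent (BI u ?S) (?N ?S) (r ?S) \<beta>' l)"
        using \<beta> l rc[of ?S] by (simp add: ent_mult[of _ "BI u ?S"])
      show "ent (BI u ?T) (?N ?S) (r ?T * rmap E c) \<beta> l = ent (BI u ?T) (?N ?S) (rmap (Irep u) c * r ?S) \<beta> l"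
      proof (cases \<beta>)
        case None
        hence T: "?T = u" using \<beta> by simp
        have "ent (BI u ?T) (?N ?S) (r ?T * rmap E c) \<beta> l
           = (\<Sum>l'\<in>?N u. ent (BI u u) (?N u) L None l' * ent (?N u) (?N ?S) (rmap E c) l' l)"
          unfolding L using None T rN by (intro sum.cong) auto
        also have "\<dots> = ent (BI u u) (?N ?S) (L * rmap E c) None l"
          using Lc Ec[OF c] T l by (simp add: ent_mult[of _ "?N u"])
        also have "\<dots> = ent (BI u ?T) (?N ?S) (rmap (Irep u) c * r ?S) \<beta> l"
          unfolding R using None T c l rS by (simp add: actI_def)
        finally show ?thesis .
      next
        case (Some b)
        hence b: "b \<in> arrs Q" "src Q b = ?T" "tgt Q b = u" using \<beta> by auto
        have "ent (BI u ?T) (?N ?S) (r ?T * rmap E c) \<beta> l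
           = (\<Sum>l'\<in>?N ?T. ent (BI u u) (?N ?T) (L * rmap E b) None l' * ent (?N ?T) (?N ?S) (rmap E c) l' l)"
          unfolding L using Some by (intro sum.cong refl) (simp add: rS[OF _ \<beta>[unfolded Some]])
        also have "\<dots> = ent (BI u u) (?N ?S) ((L * rmap E b) * rmap E c) None l"
          using ent_mult[of "BI u u" "?N ?T" "?N ?S" "L * rmap E b" "rmap E c" None l] Lc Ec[OF c] Ec[OF b(1)] b l
          by (simp del: assoc_mult_mat)
        also have "(L * rmap E b) * rmap E c = L * (rmap E b * rmap E c)"
          using Lc Ec[OF c] Ec[OF b(1)] b by (simp add: assoc_mult_mat[of _ _ "rdim E u" _ "rdim E ?T" _ "rdim E ?S"])
        also have "rmap E b * rmap E c = 0\<^sub>m (rdim E u) (rdim E ?S)" using E0[OF c b(1)] b by simp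
        also have "L * 0\<^sub>m (rdim E u) (rdim E ?S) = 0\<^sub>m (card (BI u u)) (card (?N ?S))" using Lc by simp
        also have "ent (BI u u) (?N ?S) \<dots> None l = 0" using l idx_less[of "?N ?S" l] idx_less[of "BI u u" None] by (simp add: ent_def)
        also have "0 = ent (BI u ?T) (?N ?S) (rmap (Irep u) c * r ?S) \<beta> l"
          unfolding R using Some by (simp add: actI_def)
        finally show ?thesis .
      qed
    qed simp_all
  qed
  have rf: "\<forall>w\<in>verts Q. r w * f w = 1\<^sub>m (rdim (Irep u :: ('v, 'a, 'k) rep) w)"
  proof (intro ballI)
    fix w assume w: "w \<in> verts Q"
    show "r w * f w = 1\<^sub>m (rdim (Irep u :: ('v, 'a, 'k) rep) w)"
    proof (rule ent_eqI[of "BI u w" "BI u w"])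
      show "r w * f w \<in> carrier_mat (card (BI u w)) (card (BI u w))"
        using rc fc[OF w] by (auto intro!: mult_carrier_mat)
    next
      fix \<beta> \<beta>' assume \<beta>: "\<beta> \<in> BI u w" and \<beta>': "\<beta>' \<in> BI u w"
      have L: "ent (BI u w) (BI u w) (r w * f w) \<beta> \<beta>'
          = (\<Sum>l\<in>?N w. ent (BI u w) (?N w) (r w) \<beta> l * ent (?N w) (BI u w) (f w) l \<beta>')"
        using \<beta> \<beta>' rc[of w] fc[OF w] by (simp add: ent_mult[of _ "?N w"])
      show "ent (BI u w) (BI u w) (r w * f w) \<beta> \<beta>' = ent (BI u w) (BI u w) (1\<^sub>m (rdim (Irep u :: ('v, 'a, 'k) rep) w)) \<beta> \<beta>'"
      proof (cases \<beta>)
        case None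
        hence wu: "w = u" using \<beta> by simp
        have "ent (BI u w) (BI u w) (r w * f w) \<beta> \<beta>'
           = (\<Sum>l\<in>?N u. ent (BI u u) (?N u) L None l * ent (?N u) (BI u u) (f u) l \<beta>')"
          unfolding L using None wu rN by (intro sum.cong) auto
        also have "\<dots> = ent (BI u u) (BI u u) (L * f u) None \<beta>'"
          using Lc fc[OF u] \<beta>' wu by (simp add: ent_mult[of _ "?N u"])
        finally show ?thesis unfolding Lf using None wu \<beta>' by simp
      next
        case (Some b)
        hence b: "b \<in> arrs Q" "src Q b = w" "tgt Q b = u" using \<beta> by auto
        have "ent (BI u w) (BI u w) (r w * f w) \<beta> \<beta>'
           = (\<Sum>l\<in>?N w. ent (BI u u) (?N w) (L * rmap E b) None l * ent (?N w) (BI u w) (f w) l \<beta>')"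
          unfolding L using Some by (intro sum.cong refl) (simp add: rS[OF _ \<beta>[unfolded Some]])
        also have "\<dots> = ent (BI u u) (BI u w) ((L * rmap E b) * f w) None \<beta>'"
          using ent_mult[of "BI u u" "?N w" "BI u w" "L * rmap E b" "f w" None \<beta>'] Lc fc[OF w] Ec[OF b(1)] b \<beta>'
          by (simp del: assoc_mult_mat)
        also have "(L * rmap E b) * f w = L * (rmap E b * f w)"
          using Lc fc[OF w] Ec[OF b(1)] b by (simp add: assoc_mult_mat[of _ _ "rdim E u" _ "rdim E w" _ "card (BI u w)"])
        also have "rmap E b * f w = f u * bmat (BI u u) (BI u w) (actI u b)" using fh[OF b(1)] b by simp
        also have "L * (f u * bmat (BI u u) (BI u w) (actI u b)) = (L * f u) * bmat (BI u u) (BI u w) (actI u b)"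
          using Lc fc[OF u] by (simp add: assoc_mult_mat[of _ _ "rdim E u" _ "card (BI u u)" _ "card (BI u w)"])
        also have "\<dots> = bmat (BI u u) (BI u w) (actI u b)" unfolding Lf by (rule left_mult_one_mat[OF bmat_carrier])
        also have "ent (BI u u) (BI u w) \<dots> None \<beta>' = actI u b None \<beta>'" using \<beta>' by simp
        also have "\<dots> = ent (BI u w) (BI u w) (1\<^sub>m (rdim (Irep u :: ('v, 'a, 'k) rep) w)) \<beta> \<beta>'"
          using Some b \<beta>' by (auto simp: actI_def)
        finally show ?thesis .
      qed
    qed simp_all
  qed
  show "\<exists>s. is_hom Q Z E s \<and> hom_eq Q (hom_comp g s) (hom_id Z)"
    by (rule retr_sec[OF S rhom rf fq])
qed

end


lemma sum_delta_l'[simp]: "finite S \<Longrightarrow> (\<Sum>s\<in>S. (if t = s then 1 else 0) * f s) = (if t \<in> S then f t else (0::'k::field))"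
  by (simp add: if_distrib[of "\<lambda>x. x * f _"] sum.delta' cong: if_cong)
lemma sum_delta_r'[simp]: "finite S \<Longrightarrow> (\<Sum>s\<in>S. f s * (if t = s then 1 else 0)) = (if t \<in> S then f t else (0::'k::field))"
  by (simp add: if_distrib[of "\<lambda>x. f _ * x"] sum.delta' cong: if_cong)

lemma sum_plus: "finite A \<Longrightarrow> finite B \<Longrightarrow> (\<Sum>x\<in>Inl ` A \<union> Inr ` B. F x) = (\<Sum>a\<in>A. F (Inl a)) + (\<Sum>b\<in>B. F (Inr b))"
  by (subst sum.union_disjoint) (auto simp: sum.reindex)

lemma dim_bmat[simp]: "dim_row (bmat R C \<phi>) = card R" "dim_col (bmat R C \<phi>) = card C"
  unfolding bmat_def by simp_all

lemma vent_bmat_mult: "finite R \<Longrightarrow> finite C \<Longrightarrow> x \<in> carrier_vec (card C) \<Longrightarrow> r \<in> R \<Longrightarrow>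
   vent R (bmat R C \<phi> *\<^sub>v x) r = (\<Sum>c\<in>C. \<phi> r c * vent C x c)"
  by (simp add: vent_mult[of R C])

context
  fixes Q :: "('v, 'a) quiver"
  assumes fq: "finite_quiver Q"
begin

lemma fq_simp[simp]: "finite_quiver Q" by (rule fq)

definition BE :: "'v \<Rightarrow> 'v \<Rightarrow> 'v \<Rightarrow> ('a option + 'a option) set" where
  "BE v u y = Inl ` BP Q v y \<union> Inr ` BI Q u y"

lemma BE_fin[simp]: "finite (BE v u y)" unfolding BE_def using fq by simp
lemma BE_Inl[simp]: "Inl p \<in> BE v u y \<longleftrightarrow> p \<in> BP Q v y" unfolding BE_def by auto
lemma BE_Inr[simp]: "Inr p \<in> BE v u y \<longleftrightarrow> p \<in> BI Q u y" unfolding BE_def by auto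
lemma sum_BE: "(\<Sum>x\<in>BE v u y. F x) = (\<Sum>p\<in>BP Q v y. F (Inl p)) + (\<Sum>i\<in>BI Q u y. F (Inr i))"
  unfolding BE_def using fq by (simp add: sum_plus)

definition th :: "'a \<Rightarrow> 'a \<Rightarrow> 'a \<Rightarrow> 'a \<Rightarrow> 'a option \<Rightarrow> 'a option \<Rightarrow> 'k::field" where
  "th b0 c0 d0 c p i = (if c = c0 \<and> p = Some d0 \<and> i = Some b0 then 1 else 0)"

definition actE :: "'v \<Rightarrow> 'v \<Rightarrow> 'a \<Rightarrow> 'a \<Rightarrow> 'a \<Rightarrow> 'a \<Rightarrow> ('a option + 'a option) \<Rightarrow> ('a option + 'a option) \<Rightarrow> 'k::field" where
  "actE v u b0 c0 d0 c x x' = (case x of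
      Inl p' \<Rightarrow> (case x' of Inl p \<Rightarrow> actP Q v c p' p | Inr i \<Rightarrow> th b0 c0 d0 c p' i)
    | Inr i' \<Rightarrow> (case x' of Inl _ \<Rightarrow> 0 | Inr i \<Rightarrow> actI Q u c i' i))"

lemma actE_simps[simp]:
  "actE v u b0 c0 d0 c (Inl p') (Inl p) = actP Q v c p' p"
  "actE v u b0 c0 d0 c (Inl p') (Inr i) = th b0 c0 d0 c p' i"
  "actE v u b0 c0 d0 c (Inr i') (Inl p) = 0"
  "actE v u b0 c0 d0 c (Inr i') (Inr i) = actI Q u c i' i"
  unfolding actE_def by simp_all

definition Erep :: "'v \<Rightarrow> 'v \<Rightarrow> 'a \<Rightarrow> 'a \<Rightarrow> 'a \<Rightarrow> ('v, 'a, 'k::field) rep" where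
  "Erep v u b0 c0 d0 = \<lparr>rdim = (\<lambda>y. card (BE v u y)),
     rmap = (\<lambda>c. bmat (BE v u (tgt Q c)) (BE v u (src Q c)) (actE v u b0 c0 d0 c))\<rparr>"

lemma Erep_simps[simp]: "rdim (Erep v u b0 c0 d0) y = card (BE v u y)"
  "rmap (Erep v u b0 c0 d0) c = bmat (BE v u (tgt Q c)) (BE v u (src Q c)) (actE v u b0 c0 d0 c)"
  unfolding Erep_def by simp_all

lemma Erep_rep: "is_rep Q (Erep v u b0 c0 d0 :: ('v, 'a, 'k::field) rep)"
  unfolding is_rep_def
proof (intro conjI ballI impI)
  fix a b assume a: "a \<in> arrs Q" and b: "b \<in> arrs Q" and ab: "tgt Q a = src Q b"
  let ?E = "Erep v u b0 c0 d0 :: ('v, 'a, 'k) rep"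
  show "rmap ?E b * rmap ?E a = 0\<^sub>m (rdim ?E (tgt Q b)) (rdim ?E (src Q a))"
  proof (rule ent_eqI[of "BE v u (tgt Q b)" "BE v u (src Q a)"])
    fix r c assume r: "r \<in> BE v u (tgt Q b)" and c: "c \<in> BE v u (src Q a)"
    have "ent (BE v u (tgt Q b)) (BE v u (src Q a)) (rmap ?E b * rmap ?E a) r c
      = (\<Sum>s\<in>BE v u (tgt Q a). actE v u b0 c0 d0 b r s * actE v u b0 c0 d0 a s c)"
      using r c ab by (simp add: ent_mult[of _ "BE v u (tgt Q a)"])
    also have "\<dots> = (0::'k)"
      by (rule sum.neutral)
        (auto simp: actE_def actP_def[OF fq] actI_def[OF fq] th_def split: sum.split)
    finally show "ent (BE v u (tgt Q b)) (BE v u (src Q a)) (rmap ?E b * rmap ?E a) r c =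
      ent (BE v u (tgt Q b)) (BE v u (src Q a)) (0\<^sub>m (rdim ?E (tgt Q b)) (rdim ?E (src Q a))) r c"
      using r c by simp
  qed (use ab in \<open>auto intro!: mult_carrier_mat[OF bmat_carrier]\<close>)
qed auto

definition fE :: "'v \<Rightarrow> 'v \<Rightarrow> 'v \<Rightarrow> 'k::field mat" where
  "fE v u w = bmat (BE v u w) (BP Q v w) (\<lambda>x p. if x = Inl p then 1 else 0)"

definition gE :: "'v \<Rightarrow> 'v \<Rightarrow> 'v \<Rightarrow> 'k::field mat" where
  "gE v u w = bmat (BI Q u w) (BE v u w) (\<lambda>i x. if x = Inr i then 1 else 0)"

lemma Erep_exact:
  fixes y :: "'k::field vec"
  assumes y: "y \<in> carrier_vec (card (BE v u w))"
  shows "(gE v u w *\<^sub>v y = 0\<^sub>v (card (BI Q u w))) = (\<exists>x\<in>carrier_vec (card (BP Q v w)). fE v u w *\<^sub>v x = y)"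
proof
  assume gy: "gE v u w *\<^sub>v y = 0\<^sub>v (card (BI Q u w))"
  let ?x = "bvec (BP Q v w) (\<lambda>p. vent (BE v u w) y (Inl p))"
  have yr: "vent (BE v u w) y (Inr i) = 0" if i: "i \<in> BI Q u w" for i
  proof -
    have "vent (BI Q u w) (gE v u w *\<^sub>v y) i = vent (BE v u w) y (Inr i)"
      using i y unfolding gE_def by (simp add: vent_bmat_mult)
    thus ?thesis using gy i by simp
  qed
  have "fE v u w *\<^sub>v ?x = y"
  proof (rule vent_eqI[of "BE v u w"])
    fix x assume x: "x \<in> BE v u w"
    show "vent (BE v u w) (fE v u w *\<^sub>v ?x) x = vent (BE v u w) y x"
      using x yr unfolding fE_def by (cases x) (auto simp: vent_bmat_mult)
  qed (use y in \<open>auto simp: fE_def intro!: mult_mat_vec_carrier[OF bmat_carrier]\<close>)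
  thus "\<exists>x\<in>carrier_vec (card (BP Q v w)). fE v u w *\<^sub>v x = y"
    by (intro bexI[of _ ?x]) auto
next
  assume "\<exists>x\<in>carrier_vec (card (BP Q v w)). fE v u w *\<^sub>v x = y"
  then obtain x where x: "x \<in> carrier_vec (card (BP Q v w))" and y: "y = fE v u w *\<^sub>v x" by auto
  show "gE v u w *\<^sub>v y = 0\<^sub>v (card (BI Q u w))"
  proof (rule vent_eqI[of "BI Q u w"])
    fix i assume i: "i \<in> BI Q u w"
    have "vent (BI Q u w) (gE v u w *\<^sub>v y) i = vent (BE v u w) y (Inr i)"
      using i assms unfolding gE_def by (simp add: vent_bmat_mult)
    also have "\<dots> = 0" using i y x unfolding fE_def by (simp add: vent_bmat_mult)
    finally show "vent (BI Q u w) (gE v u w *\<^sub>v y) i = vent (BI Q u w) (0\<^sub>v (card (BI Q u w))) i"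
      using i by simp
  qed (use y x in \<open>auto simp: gE_def fE_def intro!: mult_mat_vec_carrier[OF bmat_carrier]\<close>)
qed

lemma Erep_ses: "ses Q (Prep Q v) (Erep v u b0 c0 d0) (Irep Q u) (fE v u) (gE v u :: 'v \<Rightarrow> 'k::field mat)"
  unfolding ses_def
proof (intro conjI)
  let ?E = "Erep v u b0 c0 d0 :: ('v, 'a, 'k) rep"
  show "is_rep Q (Prep Q v :: ('v, 'a, 'k) rep)" using Prep_rep[OF fq] .
  show "is_rep Q ?E" by (rule Erep_rep)
  show "is_rep Q (Irep Q u :: ('v, 'a, 'k) rep)" using Irep_rep[OF fq] .
  show "is_hom Q (Prep Q v) ?E (fE v u)"
    unfolding is_hom_def
  proof (intro conjI ballI)
    fix w show "fE v u w \<in> carrier_mat (rdim ?E w) (rdim (Prep Q v :: ('v, 'a, 'k) rep) w)"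
      using fq unfolding fE_def by simp
  next
    fix c assume c: "c \<in> arrs Q"
    show "fE v u (tgt Q c) * rmap (Prep Q v) c = rmap ?E c * fE v u (src Q c)"
    proof (rule ent_eqI[of "BE v u (tgt Q c)" "BP Q v (src Q c)"])
      fix x p assume x: "x \<in> BE v u (tgt Q c)" and p: "p \<in> BP Q v (src Q c)"
      have L: "ent (BE v u (tgt Q c)) (BP Q v (src Q c)) (fE v u (tgt Q c) * rmap (Prep Q v) c) x p
         = (\<Sum>p'\<in>BP Q v (tgt Q c). (if x = Inl p' then 1 else 0) * actP Q v c p' p)"
        using x p fq unfolding fE_def by (simp add: ent_mult[of _ "BP Q v (tgt Q c)"])
      have R: "ent (BE v u (tgt Q c)) (BP Q v (src Q c)) (rmap ?E c * fE v u (src Q c)) x p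
         = (\<Sum>x'\<in>BE v u (src Q c). actE v u b0 c0 d0 c x x' * (if x' = Inl p then 1 else 0))"
        using x p fq unfolding fE_def by (simp add: ent_mult[of _ "BE v u (src Q c)"])
      show "ent (BE v u (tgt Q c)) (BP Q v (src Q c)) (fE v u (tgt Q c) * rmap (Prep Q v) c) x p =
          ent (BE v u (tgt Q c)) (BP Q v (src Q c)) (rmap ?E c * fE v u (src Q c)) x p"
        unfolding L R using x p fq by (cases x) auto
    qed (use fq in \<open>auto simp: fE_def intro!: mult_carrier_mat[OF bmat_carrier]\<close>)
  qed
  show "is_hom Q ?E (Irep Q u) (gE v u)"
    unfolding is_hom_def
  proof (intro conjI ballI)
    fix w show "gE v u w \<in> carrier_mat (rdim (Irep Q u :: ('v, 'a, 'k) rep) w) (rdim ?E w)"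
      using fq unfolding gE_def by simp
  next
    fix c assume c: "c \<in> arrs Q"
    show "gE v u (tgt Q c) * rmap ?E c = rmap (Irep Q u) c * gE v u (src Q c)"
    proof (rule ent_eqI[of "BI Q u (tgt Q c)" "BE v u (src Q c)"])
      fix i x assume i: "i \<in> BI Q u (tgt Q c)" and x: "x \<in> BE v u (src Q c)"
      have L: "ent (BI Q u (tgt Q c)) (BE v u (src Q c)) (gE v u (tgt Q c) * rmap ?E c) i x
         = (\<Sum>x'\<in>BE v u (tgt Q c). (if x' = Inr i then 1 else 0) * actE v u b0 c0 d0 c x' x)"
        using x i fq unfolding gE_def by (simp add: ent_mult[of _ "BE v u (tgt Q c)"])
      have R: "ent (BI Q u (tgt Q c)) (BE v u (src Q c)) (rmap (Irep Q u) c * gE v u (src Q c)) i x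
         = (\<Sum>i'\<in>BI Q u (src Q c). actI Q u c i i' * (if x = Inr i' then 1 else 0))"
        using x i fq unfolding gE_def by (simp add: ent_mult[of _ "BI Q u (src Q c)"])
      show "ent (BI Q u (tgt Q c)) (BE v u (src Q c)) (gE v u (tgt Q c) * rmap ?E c) i x =
          ent (BI Q u (tgt Q c)) (BE v u (src Q c)) (rmap (Irep Q u) c * gE v u (src Q c)) i x"
        unfolding L R using x i fq by (cases x) auto
    qed (use fq in \<open>auto simp: gE_def intro!: mult_carrier_mat[OF bmat_carrier]\<close>)
  qed
  show "hom_injective Q (Prep Q v) (fE v u :: 'v \<Rightarrow> 'k mat)"
    unfolding hom_injective_def
  proof (intro ballI impI)
    fix w and x :: "'k vec"
    assume x: "x \<in> carrier_vec (rdim (Prep Q v :: ('v, 'a, 'k) rep) w)"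
      and fx: "fE v u w *\<^sub>v x = 0\<^sub>v (dim_row (fE v u w :: 'k mat))"
    show "x = 0\<^sub>v (rdim (Prep Q v :: ('v, 'a, 'k) rep) w)"
    proof (rule vent_eqI[of "BP Q v w"])
      fix p assume p: "p \<in> BP Q v w"
      have "vent (BE v u w) (fE v u w *\<^sub>v x) (Inl p) = vent (BP Q v w) x p"
        using x p fq unfolding fE_def by (simp add: vent_bmat_mult)
      thus "vent (BP Q v w) x p = vent (BP Q v w) (0\<^sub>v (rdim (Prep Q v :: ('v, 'a, 'k) rep) w)) p"
        using fx p fq unfolding fE_def by simp
    qed (use x fq in auto)
  qed
  show "hom_surjective Q ?E (Irep Q u) (gE v u)"
    unfolding hom_surjective_def
  proof (intro ballI)
    fix w and z :: "'k vec" assume z: "z \<in> carrier_vec (rdim (Irep Q u :: ('v, 'a, 'k) rep) w)"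
    let ?x = "bvec (BE v u w) (\<lambda>x. case x of Inr i \<Rightarrow> vent (BI Q u w) z i | Inl _ \<Rightarrow> 0)"
    have "gE v u w *\<^sub>v ?x = z"
    proof (rule vent_eqI[of "BI Q u w"])
      fix i assume i: "i \<in> BI Q u w"
      show "vent (BI Q u w) (gE v u w *\<^sub>v ?x) i = vent (BI Q u w) z i"
        using i fq unfolding gE_def by (simp add: vent_bmat_mult)
    qed (use z fq in \<open>auto simp: gE_def intro!: mult_mat_vec_carrier[OF bmat_carrier]\<close>)
    thus "\<exists>x\<in>carrier_vec (rdim ?E w). gE v u w *\<^sub>v x = z" by (intro bexI[of _ ?x]) auto
  qed
  show "\<forall>w\<in>verts Q. \<forall>y\<in>carrier_vec (rdim ?E w).
       (gE v u w *\<^sub>v y = 0\<^sub>v (rdim (Irep Q u :: ('v, 'a, 'k) rep) w)) =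
       (\<exists>x\<in>carrier_vec (rdim (Prep Q v :: ('v, 'a, 'k) rep) w). fE v u w *\<^sub>v x = y)"
    apply (intro ballI)
    subgoal for w y using Erep_exact[of y v u w] by simp
    done
qed

definition EQS :: "'v \<Rightarrow> 'v \<Rightarrow> 'a \<Rightarrow> 'a \<Rightarrow> 'a \<Rightarrow> ('v \<Rightarrow> 'a option \<Rightarrow> 'a option \<Rightarrow> 'k::field) \<Rightarrow> bool" where
  "EQS v u b0 c0 d0 \<psi> \<longleftrightarrow> (\<forall>c d b. c \<in> arrs Q \<and> d \<in> arrs Q \<and> b \<in> arrs Q \<and> src Q d = v \<and> tgt Q d = tgt Q c
      \<and> src Q b = src Q c \<and> tgt Q b = u \<longrightarrow>
     (if src Q c = v \<and> d = c then \<psi> (src Q c) None (Some b) else 0) + (if c = c0 \<and> d = d0 \<and> b = b0 then 1 else 0)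
     = (if tgt Q c = u \<and> b = c then \<psi> (tgt Q c) (Some d) None else 0))"

lemma sumP: "(\<Sum>p\<in>BP Q v S. actP Q v c (Some d) p * F p) = (if src Q c = v \<and> d = c \<and> S = v then F None else (0::'k::field))"
proof (cases "src Q c = v \<and> d = c")
  case True
  hence "(\<Sum>p\<in>BP Q v S. actP Q v c (Some d) p * F p) = (\<Sum>p\<in>BP Q v S. (if p = None then 1 else 0) * F p)"
    by (intro sum.cong refl) (simp add: actP_def[OF fq])
  thus ?thesis using True by simp
next
  case False
  hence "(\<Sum>p\<in>BP Q v S. actP Q v c (Some d) p * F p) = (\<Sum>p\<in>BP Q v S. 0)"
    by (intro sum.cong refl) (auto simp: actP_def[OF fq])
  thus ?thesis using False by auto
qed

lemma sumI: "(\<Sum>i\<in>BI Q u T. F i * actI Q u c i (Some b)) = (if tgt Q c = u \<and> b = c \<and> T = u then F None else (0::'k::field))"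
proof (cases "tgt Q c = u \<and> b = c")
  case True
  hence "(\<Sum>i\<in>BI Q u T. F i * actI Q u c i (Some b)) = (\<Sum>i\<in>BI Q u T. F i * (if i = None then 1 else 0))"
    by (intro sum.cong refl) (simp add: actI_def[OF fq])
  thus ?thesis using True by simp
next
  case False
  hence "(\<Sum>i\<in>BI Q u T. F i * actI Q u c i (Some b)) = (\<Sum>i\<in>BI Q u T. 0)"
    by (intro sum.cong refl) (auto simp: actI_def[OF fq])
  thus ?thesis using False by auto
qed

lemma nonsplit:
  assumes noeq: "\<And>\<psi> :: 'v \<Rightarrow> 'a option \<Rightarrow> 'a option \<Rightarrow> 'k::field. EQS v u b0 c0 d0 \<psi> \<Longrightarrow> False"
  shows "\<not> ext1_zero Q (Irep Q u) (Prep Q v :: ('v, 'a, 'k) rep)"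
proof
  assume "ext1_zero Q (Irep Q u) (Prep Q v :: ('v, 'a, 'k) rep)"
  then obtain s where sh: "is_hom Q (Irep Q u) (Erep v u b0 c0 d0 :: ('v, 'a, 'k) rep) s"
    and sg: "hom_eq Q (hom_comp (gE v u) s) (hom_id (Irep Q u :: ('v, 'a, 'k) rep))"
    using Erep_ses[of v u b0 c0 d0] unfolding ext1_zero_def by blast
  have sc: "\<And>w. w \<in> verts Q \<Longrightarrow> s w \<in> carrier_mat (card (BE v u w)) (card (BI Q u w))"
    using sh by (auto simp: is_hom_def)
  have shc: "\<And>c. c \<in> arrs Q \<Longrightarrow> s (tgt Q c) * bmat (BI Q u (tgt Q c)) (BI Q u (src Q c)) (actI Q u c)
      = bmat (BE v u (tgt Q c)) (BE v u (src Q c)) (actE v u b0 c0 d0 c) * s (src Q c)"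
    using sh by (auto simp: is_hom_def)
  have gs: "\<And>w. w \<in> verts Q \<Longrightarrow> gE v u w * s w = 1\<^sub>m (card (BI Q u w))"
    using sg by (auto simp: hom_eq_def hom_comp_def hom_id_def)
  have sInr: "ent (BE v u w) (BI Q u w) (s w) (Inr i') i = (if i' = i then 1 else 0)"
    if w: "w \<in> verts Q" and i': "i' \<in> BI Q u w" and i: "i \<in> BI Q u w" for w i' i
  proof -
    have "ent (BE v u w) (BI Q u w) (s w) (Inr i') i = ent (BI Q u w) (BI Q u w) (gE v u w * s w) i' i"
      using i i' sc[OF w] unfolding gE_def by (simp add: ent_mult[of _ "BE v u w"])
    also have "\<dots> = (if i' = i then 1 else 0)" unfolding gs[OF w] using i i' by simp
    finally show ?thesis .
  qed
  define \<psi> where "\<psi> w p i = ent (BE v u w) (BI Q u w) (s w) (Inl p) i" for w p i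
  have "EQS v u b0 c0 d0 \<psi>"
    unfolding EQS_def
  proof (intro allI impI)
    fix c d b assume "c \<in> arrs Q \<and> d \<in> arrs Q \<and> b \<in> arrs Q \<and> src Q d = v \<and> tgt Q d = tgt Q c
      \<and> src Q b = src Q c \<and> tgt Q b = u"
    hence c: "c \<in> arrs Q" and d: "d \<in> arrs Q" "src Q d = v" "tgt Q d = tgt Q c"
      and b: "b \<in> arrs Q" "src Q b = src Q c" "tgt Q b = u" by auto
    let ?S = "src Q c" and ?T = "tgt Q c"
    have SV: "?S \<in> verts Q" and TV: "?T \<in> verts Q" using c fq by (auto simp: finite_quiver_def)
    have dT: "Some d \<in> BP Q v ?T" and bS: "Some b \<in> BI Q u ?S" using d b by auto
    have "ent (BE v u ?T) (BI Q u ?S) (bmat (BE v u ?T) (BE v u ?S) (actE v u b0 c0 d0 c) * s ?S) (Inl (Some d)) (Some b)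
       = (\<Sum>x\<in>BE v u ?S. actE v u b0 c0 d0 c (Inl (Some d)) x * ent (BE v u ?S) (BI Q u ?S) (s ?S) x (Some b))"
      using dT bS sc[OF SV] by (simp add: ent_mult[of _ "BE v u ?S"])
    also have "\<dots> = (\<Sum>p\<in>BP Q v ?S. actP Q v c (Some d) p * \<psi> ?S p (Some b))
        + (\<Sum>i\<in>BI Q u ?S. th b0 c0 d0 c (Some d) i * (if i = Some b then 1 else 0))"
      unfolding sum_BE \<psi>_def using sInr[OF SV _ bS] by simp
    also have "\<dots> = (if src Q c = v \<and> d = c then \<psi> ?S None (Some b) else 0) + (if c = c0 \<and> d = d0 \<and> b = b0 then 1 else 0)"
      unfolding sumP using bS by (simp add: th_def)
    finally have L: "ent (BE v u ?T) (BI Q u ?S) (bmat (BE v u ?T) (BE v u ?S) (actE v u b0 c0 d0 c) * s ?S) (Inl (Some d)) (Some b)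
       = (if src Q c = v \<and> d = c then \<psi> ?S None (Some b) else 0) + (if c = c0 \<and> d = d0 \<and> b = b0 then 1 else 0)" .
    have "ent (BE v u ?T) (BI Q u ?S) (s ?T * bmat (BI Q u ?T) (BI Q u ?S) (actI Q u c)) (Inl (Some d)) (Some b)
       = (\<Sum>i\<in>BI Q u ?T. \<psi> ?T (Some d) i * actI Q u c i (Some b))"
      unfolding \<psi>_def using dT bS sc[OF TV] by (simp add: ent_mult[of _ "BI Q u ?T"])
    also have "\<dots> = (if tgt Q c = u \<and> b = c then \<psi> ?T (Some d) None else 0)"
      unfolding sumI by auto
    finally have R: "ent (BE v u ?T) (BI Q u ?S) (s ?T * bmat (BI Q u ?T) (BI Q u ?S) (actI Q u c)) (Inl (Some d)) (Some b)
       = (if tgt Q c = u \<and> b = c then \<psi> ?T (Some d) None else 0)" .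
    show "(if src Q c = v \<and> d = c then \<psi> (src Q c) None (Some b) else 0) + (if c = c0 \<and> d = d0 \<and> b = b0 then 1 else 0)
     = (if tgt Q c = u \<and> b = c then \<psi> (tgt Q c) (Some d) None else 0)"
      using L R shc[OF c] by simp
  qed
  thus False by (rule noeq)
qed

end


lemma two_elems: "finite A \<Longrightarrow> 2 \<le> card A \<Longrightarrow> \<exists>x y. x \<in> A \<and> y \<in> A \<and> x \<noteq> y"
proof -
  assume f: "finite A" and c: "2 \<le> card A"
  then obtain x where x: "x \<in> A" by fastforce
  have "card (A - {x}) \<ge> 1" using f c x by simp
  hence "A - {x} \<noteq> {}" by (metis card.empty not_one_le_zero)
  then obtain y where "y \<in> A - {x}" by blast
  thus ?thesis using x by blast
qed

lemma EQS_D: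
  fixes Q :: "('v, 'a) quiver" and \<psi> :: "'v \<Rightarrow> 'a option \<Rightarrow> 'a option \<Rightarrow> 'k::field"
  assumes fq: "finite_quiver Q" and H: "EQS Q v u b0 c0 d0 \<psi>"
    and "c \<in> arrs Q" "d \<in> arrs Q" "b \<in> arrs Q" "src Q d = v" "tgt Q d = tgt Q c" "src Q b = src Q c" "tgt Q b = u"
  shows "(if src Q c = v \<and> d = c then \<psi> (src Q c) None (Some b) else 0) + (if c = c0 \<and> d = d0 \<and> b = b0 then 1 else 0)
     = (if tgt Q c = u \<and> b = c then \<psi> (tgt Q c) (Some d) None else 0)"
  by (rule H[unfolded EQS_def[OF fq], rule_format, of c d b]) (use assms(3-) in simp)

lemma triple_exists:
  fixes Q :: "('v, 'a) quiver"
  assumes fq: "finite_quiver Q" and a: "a \<in> arrs Q"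
    and deg: "4 \<le> out_deg Q (src Q a) + in_deg Q (tgt Q a)"
  shows "\<exists>b0 c0 d0. \<forall>\<psi> :: 'v \<Rightarrow> 'a option \<Rightarrow> 'a option \<Rightarrow> 'k::field. \<not> EQS Q (src Q a) (tgt Q a) b0 c0 d0 \<psi>"
proof -
  let ?v = "src Q a" and ?u = "tgt Q a"
  define Out where "Out = {d \<in> arrs Q. src Q d = ?v}"
  define In where "In = {b \<in> arrs Q. tgt Q b = ?u}"
  have fin: "finite Out" "finite In" using fq unfolding Out_def In_def finite_quiver_def by auto
  have aO: "a \<in> Out" and aI: "a \<in> In" using a unfolding Out_def In_def by auto
  have cd: "4 \<le> card Out + card In" using deg unfolding Out_def In_def out_deg_def in_deg_def by simp
  note E = EQS_def[OF fq]
  show ?thesis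
  proof (cases "\<exists>a'. a' \<in> arrs Q \<and> a' \<noteq> a \<and> src Q a' = ?v \<and> tgt Q a' = ?u")
    case True
    then obtain a' where a': "a' \<in> arrs Q" "a' \<noteq> a" "src Q a' = ?v" "tgt Q a' = ?u" by blast
    show ?thesis
    proof (intro exI allI notI)
      fix \<psi> :: "'v \<Rightarrow> 'a option \<Rightarrow> 'a option \<Rightarrow> 'k"
      assume H: "EQS Q ?v ?u a a' a \<psi>"
      from EQS_D[OF fq H a'(1) a a refl a'(4)[symmetric] a'(3)[symmetric] refl] show False using a'(2) by simp
    qed
  next
    case notA: False
    have oa: "\<And>c. c \<in> arrs Q \<Longrightarrow> src Q c = ?v \<Longrightarrow> c \<noteq> a \<Longrightarrow> tgt Q c \<noteq> ?u" using notA by blast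

    show ?thesis
    proof (cases "Out - {a} \<noteq> {} \<and> In - {a} \<noteq> {}")
      case True
      then obtain c b where c: "c \<in> Out" "c \<noteq> a" and b: "b \<in> In" "b \<noteq> a" by blast
      have c': "c \<in> arrs Q" "src Q c = ?v" "tgt Q c \<noteq> ?u" using c oa unfolding Out_def by auto
      have b': "b \<in> arrs Q" "tgt Q b = ?u" "src Q b \<noteq> ?v" using b notA unfolding In_def by auto
      show ?thesis
      proof (intro exI allI notI)
        fix \<psi> :: "'v \<Rightarrow> 'a option \<Rightarrow> 'a option \<Rightarrow> 'k"
        assume H: "EQS Q ?v ?u a c c \<psi>"
        have e1: "\<psi> ?v None (Some a) + 1 = 0"
          using EQS_D[OF fq H c'(1) c'(1) a c'(2) refl c'(2)[symmetric] refl] c'(2,3) by simp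
        have e2: "\<psi> ?v None (Some a) = \<psi> ?u (Some a) None"
          using EQS_D[OF fq H a a a refl refl refl refl] c(2) by simp
        have e3: "0 = \<psi> ?u (Some a) None"
          using EQS_D[OF fq H b'(1) a b'(1) refl b'(2)[symmetric] refl b'(2)] b'(2,3) b(2) c(2) by simp
        show False using e1 e2 e3 by simp
      qed
    next
      case False
      show ?thesis
      proof (cases "Out - {a} = {}")
        case True
        hence "Out = {a}" using aO by blast
        hence "3 \<le> card In" using cd by simp
        hence "2 \<le> card (In - {a})" using fin aI by simp
        then obtain b1 b2 where b12: "b1 \<in> In - {a}" "b2 \<in> In - {a}" "b1 \<noteq> b2"
          using two_elems[of "In - {a}"] fin by blast
        have b1: "b1 \<in> arrs Q" "tgt Q b1 = ?u" "src Q b1 \<noteq> ?v" using b12 notA unfolding In_def by auto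
        have b2: "b2 \<in> arrs Q" "tgt Q b2 = ?u" "src Q b2 \<noteq> ?v" using b12 notA unfolding In_def by auto
        show ?thesis
        proof (intro exI allI notI)
          fix \<psi> :: "'v \<Rightarrow> 'a option \<Rightarrow> 'a option \<Rightarrow> 'k"
          assume H: "EQS Q ?v ?u b1 b1 a \<psi>"
          have e1: "1 = \<psi> ?u (Some a) None"
            using EQS_D[OF fq H b1(1) a b1(1) refl b1(2)[symmetric] refl b1(2)] b1(2,3) by simp
          have e2: "0 = \<psi> ?u (Some a) None"
            using EQS_D[OF fq H b2(1) a b2(1) refl b2(2)[symmetric] refl b2(2)] b2(2,3) b12(3) by simp
          show False using e1 e2 by simp
        qed
      next
        case False2: False
        hence "In - {a} = {}" using False by blast
        hence "In = {a}" using aI by blast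
        hence "3 \<le> card Out" using cd by simp
        hence "2 \<le> card (Out - {a})" using fin aO by simp
        then obtain c1 c2 where c12: "c1 \<in> Out - {a}" "c2 \<in> Out - {a}" "c1 \<noteq> c2"
          using two_elems[of "Out - {a}"] fin by blast
        have c1: "c1 \<in> arrs Q" "src Q c1 = ?v" "tgt Q c1 \<noteq> ?u" using c12 oa unfolding Out_def by auto
        have c2: "c2 \<in> arrs Q" "src Q c2 = ?v" "tgt Q c2 \<noteq> ?u" using c12 oa unfolding Out_def by auto
        show ?thesis
        proof (intro exI allI notI)
          fix \<psi> :: "'v \<Rightarrow> 'a option \<Rightarrow> 'a option \<Rightarrow> 'k"
          assume H: "EQS Q ?v ?u a c1 c1 \<psi>"
          have e1: "\<psi> ?v None (Some a) + 1 = 0"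
            using EQS_D[OF fq H c1(1) c1(1) a c1(2) refl c1(2)[symmetric] refl] c1(2,3) by simp
          have e2: "\<psi> ?v None (Some a) = 0"
            using EQS_D[OF fq H c2(1) c2(1) a c2(2) refl c2(2)[symmetric] refl] c2(2,3) c12(3) by simp
          show False using e1 e2 by simp
        qed
      qed
    qed
  qed
qed

theorem corollary2p5:
  fixes Q :: "('v, 'a) quiver" and n :: nat and \<C> :: "('v, 'a, 'k::field) rep set"
  assumes "finite_quiver Q" and "quiver_connected Q" and "n \<ge> 2"
    and "n_cluster_tilting Q n \<C>"
  shows "\<forall>a\<in>arrs Q. out_deg Q (src Q a) + in_deg Q (tgt Q a) \<le> 3"
proof (rule ccontr)
  assume "\<not> (\<forall>a\<in>arrs Q. out_deg Q (src Q a) + in_deg Q (tgt Q a) \<le> 3)"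
  then obtain a where a: "a \<in> arrs Q" and deg: "4 \<le> out_deg Q (src Q a) + in_deg Q (tgt Q a)" by force
  have fq: "finite_quiver Q" by fact
  have v: "src Q a \<in> verts Q" and u: "tgt Q a \<in> verts Q" using a fq by (auto simp: finite_quiver_def)
  obtain b0 c0 d0 where nz: "\<forall>\<psi> :: 'v \<Rightarrow> 'a option \<Rightarrow> 'a option \<Rightarrow> 'k. \<not> EQS Q (src Q a) (tgt Q a) b0 c0 d0 \<psi>"
    using triple_exists[OF fq a deg] by blast
  have ns: "\<not> ext1_zero Q (Irep Q (tgt Q a)) (Prep Q (src Q a) :: ('v, 'a, 'k) rep)"
    by (rule nonsplit[OF fq]) (use nz in blast)
  show False
    by (rule ct_contra[OF assms(4) assms(3) Prep_proj[OF fq v] Irep_inj[OF fq u] Irep_rep[OF fq] ns])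
qed


end
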